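(* Let $n_T,n_R,n_E\ge 1$, let $\mathbf{H}_m\in\mathbb{C}^{n_R\times n_T}$ and $\mathbf{H}_e\in\mathbb{C}^{n_E\times n_T}$ be fixed matrices, let $N_m,N_e>0$, and let $C_s({\text{SNR}})$ be the secrecy capacity $$C_s({\text{SNR}})=\frac{1}{n_R}\max_{\substack{\mathbf{K}_x\succeq \mathbf{0}\\ \operatorname{tr}(\mathbf{K}_x)\le n_RN_m{\text{SNR}}}}\left[\log\det\!\left(\mathbf{I}+\tfrac{1}{N_m}\mathbf{H}_m\mathbf{K}_x\mathbf{H}_m^\dagger\right)-\log\det\!\left(\mathbf{I}+\tfrac{1}{N_e}\mathbf{H}_e\mathbf{K}_x\mathbf{H}_e^\dagger\right)\right].$$ Then the minimum bit energy required for reliable communication under secrecy constraints is $$\frac{E_b}{N_0}_{s,\min}=\frac{\log 2}{[\lambda_{\max}(\mathbf{\Phi})]^+},\qquad \mathbf{\Phi}=\mathbf{H}_m^\dagger\mathbf{H}_m-\frac{N_m}{N_e}\mathbf{H}_e^\dagger\mathbf{H}_e,$$ where $[x]^+=\max(x,0)$ and the right-hand side is interpreted as $+\infty$ when $[\lambda_{\max}(\mathbf{\Phi})]^+=0$.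
   Context: Setting: MIMO Gaussian wiretap channel $\mathbf{y}_m=\mathbf{H}_m\mathbf{x}+\mathbf{n}_m$, $\mathbf{y}_e=\mathbf{H}_e\mathbf{x}+\mathbf{n}_e$ with independent zero-mean Gaussian noises of covariances $N_m\mathbf{I}$, $N_e\mathbf{I}$, input covariance $\mathbf{K}_x$ (Hermitian positive semidefinite) with power $P=\operatorname{tr}(\mathbf{K}_x)$ bound, and ${\text{SNR}}=P/(n_RN_m)$; natural logarithms. The minimum bit energy under secrecy constraints is $\frac{E_b}{N_0}_{s,\min}=\inf_{{\text{SNR}}>0}\frac{{\text{SNR}}\,\log 2}{C_s({\text{SNR}})}$, which for a concave $C_s$ with $C_s(0)=0$ equals $\frac{\log 2}{\dot C_s(0)}$, where $\dot C_s(0)$ is the derivative of $C_s$ with respect to ${\text{SNR}}$ at ${\text{SNR}}=0$. $\lambda_{\max}$ denotes the largest eigenvalue. *)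

theory Defs
  imports "Jordan_Normal_Form.Schur_Decomposition" "HOL-Library.Extended_Real"
begin

definition mat_trace :: "complex mat \<Rightarrow> complex" where
  "mat_trace K = (\<Sum>i<dim_row K. K $$ (i,i))"

definition psd_mat :: "nat \<Rightarrow> complex mat \<Rightarrow> bool" where
  "psd_mat n K \<longleftrightarrow> K \<in> carrier_mat n n \<and> mat_adjoint K = K \<and>
     (\<forall>v \<in> carrier_vec n. 0 \<le> Re ((K *\<^sub>v v) \<bullet>c v))"

(* log det (I + (1/N) H K H^dagger); the determinant is real positive for PSD K *)
definition logdet_term :: "complex mat \<Rightarrow> real \<Rightarrow> complex mat \<Rightarrow> real" where
  "logdet_term H N K =
     ln (Re (det (1\<^sub>m (dim_row H) + (complex_of_real (1 / N)) \<cdot>\<^sub>m (H * K * mat_adjoint H))))"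

definition secrecy_rate ::
  "complex mat \<Rightarrow> complex mat \<Rightarrow> real \<Rightarrow> real \<Rightarrow> complex mat \<Rightarrow> real" where
  "secrecy_rate Hm He Nm Ne K = logdet_term Hm Nm K - logdet_term He Ne K"

(* C_s(SNR) = 1/n_R * max over PSD K with tr K <= n_R N_m SNR (max written as Sup; it is attained) *)
definition secrecy_capacity ::
  "nat \<Rightarrow> complex mat \<Rightarrow> complex mat \<Rightarrow> real \<Rightarrow> real \<Rightarrow> real \<Rightarrow> real" where
  "secrecy_capacity nT Hm He Nm Ne snr =
     (1 / real (dim_row Hm)) *
     Sup {secrecy_rate Hm He Nm Ne K | K. psd_mat nT K \<and>
            Re (mat_trace K) \<le> real (dim_row Hm) * Nm * snr}"

(* Eb/N0_{s,min} = inf_{SNR>0} SNR log 2 / C_s(SNR), valued in extended reals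
   (a ratio with C_s(SNR) = 0 is +infinity; C_s >= 0 always) *)
definition ebn0_s_min ::
  "nat \<Rightarrow> complex mat \<Rightarrow> complex mat \<Rightarrow> real \<Rightarrow> real \<Rightarrow> ereal" where
  "ebn0_s_min nT Hm He Nm Ne =
     (INF snr \<in> {0<..}. (if secrecy_capacity nT Hm He Nm Ne snr > 0
                         then ereal (snr * ln 2 / secrecy_capacity nT Hm He Nm Ne snr)
                         else \<infinity>))"

(* largest eigenvalue of a Hermitian matrix (all eigenvalues are real) *)
definition lambda_max :: "complex mat \<Rightarrow> real" where
  "lambda_max A = Max (Re ` {k. eigenvalue A k})"

end

theory Submission
  imports Defs "Jordan_Normal_Form.Spectral_Radius"
begin

lemma adj_dim[simp]: "dim_row (mat_adjoint A) = dim_col A" "dim_col (mat_adjoint A) = dim_row A"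
  unfolding mat_adjoint_def by auto

lemma adj_index[simp]: "i < dim_col A \<Longrightarrow> j < dim_row A \<Longrightarrow> mat_adjoint A $$ (i,j) = cnj (A $$ (j,i))"
  unfolding mat_adjoint_def by (auto simp: mat_of_rows_def)

lemma adj_carrier[simp]: "A \<in> carrier_mat n m \<Longrightarrow> mat_adjoint A \<in> carrier_mat m n"
  by (metis adj_dim carrier_matD carrier_matI)

lemma adj_adj[simp]: "mat_adjoint (mat_adjoint (A::complex mat)) = A"
  by (rule eq_matI) auto

lemma adj_mult: assumes "(A::complex mat) \<in> carrier_mat n m" "B \<in> carrier_mat m k"
  shows "mat_adjoint (A * B) = mat_adjoint B * mat_adjoint A"
proof (rule eq_matI)
  fix i j assume "i < dim_row (mat_adjoint B * mat_adjoint A)" "j < dim_col (mat_adjoint B * mat_adjoint A)"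
  then have ij: "i < k" "j < n" using assms by auto
  show "mat_adjoint (A * B) $$ (i, j) = (mat_adjoint B * mat_adjoint A) $$ (i, j)"
    using assms ij by (simp add: scalar_prod_def cnj_sum mult.commute)
qed (use assms in auto)

lemma adj_add: assumes "(A::complex mat) \<in> carrier_mat n m" "B \<in> carrier_mat n m"
  shows "mat_adjoint (A + B) = mat_adjoint A + mat_adjoint B"
  using assms by (intro eq_matI) auto

lemma adj_minus: assumes "(A::complex mat) \<in> carrier_mat n m" "B \<in> carrier_mat n m"
  shows "mat_adjoint (A - B) = mat_adjoint A - mat_adjoint B"
  using assms by (intro eq_matI) auto

lemma adj_smult: "mat_adjoint ((c::complex) \<cdot>\<^sub>m A) = cnj c \<cdot>\<^sub>m mat_adjoint A"
  by (intro eq_matI) auto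

lemma adj_one[simp]: "mat_adjoint (1\<^sub>m n :: complex mat) = 1\<^sub>m n"
  by (intro eq_matI) auto

lemma adj_zero[simp]: "mat_adjoint (0\<^sub>m n m :: complex mat) = 0\<^sub>m m n"
  by (intro eq_matI) auto

definition unitary :: "nat \<Rightarrow> complex mat \<Rightarrow> bool" where
  "unitary n U \<longleftrightarrow> U \<in> carrier_mat n n \<and> mat_adjoint U * U = 1\<^sub>m n"

definition dmat :: "nat \<Rightarrow> (nat \<Rightarrow> real) \<Rightarrow> complex mat" where
  "dmat n d = mat n n (\<lambda>(i,j). if i = j then complex_of_real (d i) else 0)"

lemma dmat_carrier[simp]: "dmat n d \<in> carrier_mat n n"
  unfolding dmat_def by auto

lemma dmat_dim[simp]: "dim_row (dmat n d) = n" "dim_col (dmat n d) = n"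
  unfolding dmat_def by auto

lemma dmat_index[simp]: "i < n \<Longrightarrow> j < n \<Longrightarrow> dmat n d $$ (i,j) = (if i = j then complex_of_real (d i) else 0)"
  unfolding dmat_def by auto

lemma adj_dmat[simp]: "mat_adjoint (dmat n d) = dmat n d"
  by (rule eq_matI) auto

lemma dmat_mult: "dmat n a * dmat n b = dmat n (\<lambda>i. a i * b i)"
proof (rule eq_matI)
  fix i j assume ij: "i < dim_row (dmat n (\<lambda>i. a i * b i))" "j < dim_col (dmat n (\<lambda>i. a i * b i))"
  then have "i < n" "j < n" by auto
  then show "(dmat n a * dmat n b) $$ (i, j) = dmat n (\<lambda>i. a i * b i) $$ (i, j)"
    by (auto simp: scalar_prod_def if_distrib cong: if_cong)
qed auto

lemma prod_list_upt: "prod_list (map f [0..<n]) = (\<Prod>i<n. f i)"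
  by (induct n) auto

lemma det_dmat: "det (dmat n d) = complex_of_real (\<Prod>i<n. d i)"
proof -
  have "det (dmat n d) = prod_list (diag_mat (dmat n d))"
    by (rule det_upper_triangular) (auto simp: upper_triangular_def)
  also have "\<dots> = (\<Prod>i<n. complex_of_real (d i))"
    unfolding diag_mat_def by (simp add: prod_list_upt)
  finally show ?thesis by simp
qed

lemma unitary_carrier: "unitary n U \<Longrightarrow> U \<in> carrier_mat n n"
  unfolding unitary_def by auto

lemma unitary_right: "unitary n U \<Longrightarrow> U * mat_adjoint U = 1\<^sub>m n"
  unfolding unitary_def using mat_mult_left_right_inverse[of "mat_adjoint U" n U] by auto

lemma unitary_adj: "unitary n U \<Longrightarrow> unitary n (mat_adjoint U)"
  using unitary_right[of n U] unfolding unitary_def by auto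

lemma unitary_mult: assumes "unitary n U" "unitary n V" shows "unitary n (U * V)"
proof -
  have U: "U \<in> carrier_mat n n" and V: "V \<in> carrier_mat n n" using assms unitary_def by auto
  have aU: "mat_adjoint U \<in> carrier_mat n n" and aV: "mat_adjoint V \<in> carrier_mat n n" using U V by auto
  have "mat_adjoint (U * V) * (U * V) = (mat_adjoint V * mat_adjoint U) * (U * V)"
    by (simp add: adj_mult[OF U V])
  also have "\<dots> = mat_adjoint V * (mat_adjoint U * (U * V))"
    by (rule assoc_mult_mat[OF aV aU]) (use U V in auto)
  also have "mat_adjoint U * (U * V) = (mat_adjoint U * U) * V"
    by (rule assoc_mult_mat[symmetric, OF aU U V])
  also have "\<dots> = V" using assms V unfolding unitary_def by simp
  also have "mat_adjoint V * V = 1\<^sub>m n" using assms unfolding unitary_def by simp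
  finally show ?thesis using U V unfolding unitary_def by auto
qed

lemma adj_inner: assumes A: "(A::complex mat) \<in> carrier_mat n m" and x: "x \<in> carrier_vec m" and u: "u \<in> carrier_vec n"
  shows "(A *\<^sub>v x) \<bullet>c u = x \<bullet>c (mat_adjoint A *\<^sub>v u)"
proof -
  have "(A *\<^sub>v x) \<bullet>c u = (\<Sum>i<n. (\<Sum>k<m. A $$ (i,k) * x $ k) * cnj (u $ i))"
    using A x u by (simp add: scalar_prod_def lessThan_atLeast0)
  also have "\<dots> = (\<Sum>i<n. \<Sum>k<m. A $$ (i,k) * x $ k * cnj (u $ i))"
    by (simp add: sum_distrib_right)
  also have "\<dots> = (\<Sum>k<m. \<Sum>i<n. A $$ (i,k) * x $ k * cnj (u $ i))"
    by (rule sum.swap)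
  also have "\<dots> = (\<Sum>k<m. x $ k * cnj (\<Sum>i<n. cnj (A $$ (i,k)) * u $ i))"
    by (simp add: sum_distrib_left cnj_sum mult_ac)
  also have "\<dots> = x \<bullet>c (mat_adjoint A *\<^sub>v u)"
    using A x u by (simp add: scalar_prod_def lessThan_atLeast0)
  finally show ?thesis .
qed

lemma mat_trace_comm: assumes "(A::complex mat) \<in> carrier_mat n m" "B \<in> carrier_mat m n"
  shows "mat_trace (A * B) = mat_trace (B * A)"
proof -
  have "mat_trace (A * B) = (\<Sum>i<n. \<Sum>k<m. A $$ (i,k) * B $$ (k,i))"
    using assms by (simp add: mat_trace_def scalar_prod_def lessThan_atLeast0)
  also have "\<dots> = (\<Sum>k<m. \<Sum>i<n. B $$ (k,i) * A $$ (i,k))"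
    by (subst sum.swap) (simp add: mult.commute)
  also have "\<dots> = mat_trace (B * A)"
    using assms by (simp add: mat_trace_def scalar_prod_def lessThan_atLeast0)
  finally show ?thesis .
qed

lemma cscalar_smult_left: assumes "v \<in> carrier_vec n" "w \<in> carrier_vec n"
  shows "((a::complex) \<cdot>\<^sub>v v) \<bullet>c w = a * (v \<bullet>c w)"
  using assms by (simp add: scalar_prod_def sum_distrib_left mult_ac)

lemma cscalar_smult_right: assumes "v \<in> carrier_vec n" "w \<in> carrier_vec n"
  shows "v \<bullet>c ((a::complex) \<cdot>\<^sub>v w) = cnj a * (v \<bullet>c w)"
  using assms by (simp add: scalar_prod_def sum_distrib_left mult_ac)

lemma cnorm_real: "(v::complex vec) \<bullet>c v = complex_of_real (Re (v \<bullet>c v))"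
  by (simp add: scalar_prod_def complex_eq_iff Im_sum complex_mult_cnj)

lemma cnorm_pos: assumes "v \<in> carrier_vec n" "v \<noteq> 0\<^sub>v n" shows "Re ((v::complex vec) \<bullet>c v) > 0"
proof -
  have "v \<bullet>c v \<ge> 0" by (rule conjugate_square_ge_0_vec)
  moreover have "v \<bullet>c v \<noteq> 0" using assms by (metis conjugate_square_eq_0_vec)
  ultimately have "v \<bullet>c v > 0" by auto
  then show ?thesis by (simp add: less_complex_def)
qed

lemma cnorm_nonneg: "Re ((v::complex vec) \<bullet>c v) \<ge> 0"
  by (simp add: scalar_prod_def Re_sum complex_mult_cnj sum_nonneg)

lemma adj_mv_carrier[simp]: "U \<in> carrier_mat m n \<Longrightarrow> w \<in> carrier_vec m \<Longrightarrow> mat_adjoint U *\<^sub>v w \<in> carrier_vec n"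
  by (metis adj_carrier mult_mat_vec_carrier)

lemma mat_unit_vec: "(A::complex mat) \<in> carrier_mat m n \<Longrightarrow> i < n \<Longrightarrow> A *\<^sub>v unit_vec n i = col A i"
  by (intro eq_vecI) (auto dest: carrier_matD)

lemma dmat_mv_carrier[simp]: "dmat n d *\<^sub>v y \<in> carrier_vec n"
  by (intro carrier_vecI) simp

lemma if_mult_zero: "(if P then a else 0) * (b::complex) = (if P then a * b else 0)" by simp

lemma mv_dmat: "y \<in> carrier_vec n \<Longrightarrow> dmat n d *\<^sub>v y = vec n (\<lambda>i. complex_of_real (d i) * y $ i)"
  by (intro eq_vecI) (auto simp: scalar_prod_def if_mult_zero)

lemma mat3_vec: assumes "A \<in> carrier_mat n n" "B \<in> carrier_mat n n" "C \<in> carrier_mat n n" "w \<in> carrier_vec n"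
  shows "(A * B * C) *\<^sub>v w = A *\<^sub>v (B *\<^sub>v (C *\<^sub>v w))"
proof -
  have "(A * B * C) *\<^sub>v w = (A * B) *\<^sub>v (C *\<^sub>v w)"
    by (rule assoc_mult_mat_vec) (use assms in auto)
  also have "\<dots> = A *\<^sub>v (B *\<^sub>v (C *\<^sub>v w))"
    by (rule assoc_mult_mat_vec) (use assms in auto)
  finally show ?thesis .
qed

lemma qf_dmat: "y \<in> carrier_vec n \<Longrightarrow>
   (dmat n d *\<^sub>v y) \<bullet>c y = (\<Sum>i<n. complex_of_real (d i) * (y $ i * cnj (y $ i)))"
  by (simp add: mv_dmat scalar_prod_def lessThan_atLeast0 mult_ac)

lemma Re_qf_dmat: "y \<in> carrier_vec n \<Longrightarrow>
   Re ((dmat n d *\<^sub>v y) \<bullet>c y) = (\<Sum>i<n. d i * Re (y $ i * cnj (y $ i)))"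
  by (simp add: qf_dmat Re_sum)

lemma cnorm_sum: "y \<in> carrier_vec n \<Longrightarrow> Re (y \<bullet>c y) = (\<Sum>i<n. Re (y $ i * cnj (y $ i)))"
  by (simp add: scalar_prod_def Re_sum lessThan_atLeast0)

lemma Re_mult_cnj_nonneg: "Re (z * cnj z) \<ge> 0"
  by (simp add: complex_mult_cnj)

lemma qf_udu: assumes U: "U \<in> carrier_mat n n" and w: "w \<in> carrier_vec n"
  shows "((U * dmat n d * mat_adjoint U) *\<^sub>v w) \<bullet>c w
     = (dmat n d *\<^sub>v (mat_adjoint U *\<^sub>v w)) \<bullet>c (mat_adjoint U *\<^sub>v w)"
proof -
  have aU: "mat_adjoint U \<in> carrier_mat n n" using U by simp
  have "(U * dmat n d * mat_adjoint U) *\<^sub>v w = U *\<^sub>v (dmat n d *\<^sub>v (mat_adjoint U *\<^sub>v w))"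
    using U aU w by (simp add: mat3_vec)
  then show ?thesis
    using adj_inner[OF U, of "dmat n d *\<^sub>v (mat_adjoint U *\<^sub>v w)" w] U w aU by simp
qed

lemma unitary_cnorm: assumes "unitary n U" "w \<in> carrier_vec n"
  shows "(mat_adjoint U *\<^sub>v w) \<bullet>c (mat_adjoint U *\<^sub>v w) = w \<bullet>c w"
proof -
  have U: "U \<in> carrier_mat n n" using assms unitary_def by auto
  have "(mat_adjoint U *\<^sub>v w) \<bullet>c (mat_adjoint U *\<^sub>v w) = w \<bullet>c (U *\<^sub>v (mat_adjoint U *\<^sub>v w))"
    using adj_inner[of "mat_adjoint U" n n w "mat_adjoint U *\<^sub>v w"] U assms by simp
  also have "U *\<^sub>v (mat_adjoint U *\<^sub>v w) = (U * mat_adjoint U) *\<^sub>v w"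
    by (rule assoc_mult_mat_vec[symmetric]) (use U assms in auto)
  also have "\<dots> = w" using unitary_right[OF assms(1)] assms by simp
  finally show ?thesis .
qed

lemma unitary_col: assumes "unitary n U" "i < n"
  shows "mat_adjoint U *\<^sub>v col U i = unit_vec n i"
proof -
  have U: "U \<in> carrier_mat n n" using assms unitary_def by auto
  have "mat_adjoint U *\<^sub>v col U i = col (mat_adjoint U * U) i"
    using U assms by (simp add: col_mult2[of _ n n])
  also have "\<dots> = unit_vec n i" using assms unfolding unitary_def by simp
  finally show ?thesis .
qed

lemma rayleigh_upper: assumes U: "U \<in> carrier_mat n n" "unitary n U" and w: "w \<in> carrier_vec n"
  and d: "\<And>i. i < n \<Longrightarrow> d i \<le> c"
  shows "Re (((U * dmat n d * mat_adjoint U) *\<^sub>v w) \<bullet>c w) \<le> c * Re (w \<bullet>c w)"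
proof -
  define y where "y = mat_adjoint U *\<^sub>v w"
  have y: "y \<in> carrier_vec n" using U w unfolding y_def by simp
  have "Re (((U * dmat n d * mat_adjoint U) *\<^sub>v w) \<bullet>c w) = (\<Sum>i<n. d i * Re (y $ i * cnj (y $ i)))"
    using qf_udu[OF U(1) w] y Re_qf_dmat unfolding y_def by simp
  also have "\<dots> \<le> (\<Sum>i<n. c * Re (y $ i * cnj (y $ i)))"
    by (rule sum_mono) (use d Re_mult_cnj_nonneg in \<open>auto intro: mult_right_mono\<close>)
  also have "\<dots> = c * Re (y \<bullet>c y)" by (simp only: cnorm_sum[OF y] sum_distrib_left)
  also have "y \<bullet>c y = w \<bullet>c w" unfolding y_def by (rule unitary_cnorm[OF U(2) w])
  finally show ?thesis .
qed

lemma rayleigh_lower: assumes U: "U \<in> carrier_mat n n" "unitary n U" and w: "w \<in> carrier_vec n"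
  and d: "\<And>i. i < n \<Longrightarrow> d i \<ge> c"
  shows "Re (((U * dmat n d * mat_adjoint U) *\<^sub>v w) \<bullet>c w) \<ge> c * Re (w \<bullet>c w)"
proof -
  define y where "y = mat_adjoint U *\<^sub>v w"
  have y: "y \<in> carrier_vec n" using U w unfolding y_def by simp
  have "Re (((U * dmat n d * mat_adjoint U) *\<^sub>v w) \<bullet>c w) = (\<Sum>i<n. d i * Re (y $ i * cnj (y $ i)))"
    using qf_udu[OF U(1) w] y Re_qf_dmat unfolding y_def by simp
  also have "\<dots> \<ge> (\<Sum>i<n. c * Re (y $ i * cnj (y $ i)))"
    by (rule sum_mono) (use d Re_mult_cnj_nonneg in \<open>auto intro: mult_right_mono\<close>)
  moreover have "(\<Sum>i<n. c * Re (y $ i * cnj (y $ i))) = c * Re (y \<bullet>c y)" by (simp only: cnorm_sum[OF y] sum_distrib_left)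
  moreover have "y \<bullet>c y = w \<bullet>c w" unfolding y_def by (rule unitary_cnorm[OF U(2) w])
  ultimately show ?thesis by simp
qed

lemma eigen_of_udu: assumes U: "unitary n U" and i: "i < n"
  shows "(U * dmat n d * mat_adjoint U) *\<^sub>v col U i = complex_of_real (d i) \<cdot>\<^sub>v col U i"
proof -
  have UU: "U \<in> carrier_mat n n" using U unitary_def by auto
  have "(U * dmat n d * mat_adjoint U) *\<^sub>v col U i = U *\<^sub>v (dmat n d *\<^sub>v (mat_adjoint U *\<^sub>v col U i))"
    using UU i by (simp add: mat3_vec)
  also have "dmat n d *\<^sub>v (mat_adjoint U *\<^sub>v col U i) = complex_of_real (d i) \<cdot>\<^sub>v unit_vec n i"
    using i by (simp add: unitary_col[OF U i] mv_dmat) (intro eq_vecI, auto)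
  also have "U *\<^sub>v \<dots> = complex_of_real (d i) \<cdot>\<^sub>v col U i"
    using UU i by (simp add: mult_mat_vec mat_unit_vec)
  finally show ?thesis .
qed

lemma exists_eigvec: assumes A: "(A::complex mat) \<in> carrier_mat n n" and n: "n > 0"
  shows "\<exists>e v. v \<in> carrier_vec n \<and> v \<bullet>c v = 1 \<and> A *\<^sub>v v = e \<cdot>\<^sub>v v"
proof -
  from spectrum_non_empty[OF A n] obtain k where "eigenvalue A k" unfolding spectrum_def by auto
  then obtain v where v: "v \<in> carrier_vec n" "v \<noteq> 0\<^sub>v n" "A *\<^sub>v v = k \<cdot>\<^sub>v v"
    unfolding eigenvalue_def eigenvector_def using A by auto
  define r where "r = Re (v \<bullet>c v)"
  have r: "r > 0" unfolding r_def by (rule cnorm_pos[OF v(1,2)])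
  define a where "a = complex_of_real (1 / sqrt r)"
  define u where "u = a \<cdot>\<^sub>v v"
  have u: "u \<in> carrier_vec n" unfolding u_def using v by simp
  have "u \<bullet>c u = a * cnj a * (v \<bullet>c v)"
    unfolding u_def using v by (simp add: cscalar_smult_left[of _ n] cscalar_smult_right[of _ n])
  also have "v \<bullet>c v = complex_of_real r" unfolding r_def by (rule cnorm_real)
  also have "a * cnj a * complex_of_real r = 1" unfolding a_def using r
    by (simp flip: of_real_mult)
  finally have uu: "u \<bullet>c u = 1" .
  have "A *\<^sub>v u = k \<cdot>\<^sub>v u" unfolding u_def using A v
    by (simp add: mult_mat_vec[OF A] smult_smult_assoc mult.commute)
  then show ?thesis using u uu by blast
qed

definition nrm :: "complex vec \<Rightarrow> complex vec" where
  "nrm w = complex_of_real (1 / sqrt (Re (w \<bullet>c w))) \<cdot>\<^sub>v w"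

lemma nrm_carrier[simp]: "w \<in> carrier_vec n \<Longrightarrow> nrm w \<in> carrier_vec n"
  unfolding nrm_def by simp

lemma nrm_inner: assumes "v \<in> carrier_vec n" "w \<in> carrier_vec n"
  shows "nrm v \<bullet>c nrm w = complex_of_real (1 / sqrt (Re (v \<bullet>c v)) * (1 / sqrt (Re (w \<bullet>c w)))) * (v \<bullet>c w)"
  unfolding nrm_def using assms by (simp add: cscalar_smult_left[of _ n] cscalar_smult_right[of _ n])

lemma nrm_self: assumes "v \<in> carrier_vec n" "v \<noteq> 0\<^sub>v n" shows "nrm v \<bullet>c nrm v = 1"
proof -
  have r: "Re (v \<bullet>c v) > 0" by (rule cnorm_pos[OF assms])
  have "nrm v \<bullet>c nrm v = complex_of_real (1 / sqrt (Re (v \<bullet>c v)) * (1 / sqrt (Re (v \<bullet>c v)))) * complex_of_real (Re (v \<bullet>c v))"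
    using nrm_inner[OF assms(1) assms(1)] cnorm_real[of v] by metis
  also have "\<dots> = 1" using r by (simp flip: of_real_mult)
  finally show ?thesis .
qed

lemma nrm_unit: assumes "v \<bullet>c v = 1" shows "nrm v = v"
  unfolding nrm_def using assms by simp

lemma unitary_completion: assumes v: "v \<in> carrier_vec n" and vv: "v \<bullet>c v = 1"
  shows "\<exists>W. unitary n W \<and> col W 0 = v"
proof -
  have v0: "v \<noteq> 0\<^sub>v n" using vv v by auto
  have n: "n > 0" using v0 v by (cases n) auto
  interpret cof_vec_space n "TYPE(complex)" .
  define b where "b = basis_completion v"
  from basis_completion[OF v v0, folded b_def]
  have b: "set b \<subseteq> carrier_vec n" and dist_b: "distinct b" 
    and indep: "\<not> lin_dep (set b)" and len_b: "length b = n" and hdb: "hd b = v" by auto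
  from hdb len_b n obtain vs where bv: "b = v # vs" by (cases b, auto)
  define ws where "ws = gram_schmidt n b"
  from gram_schmidt_result[OF b dist_b indep refl, folded ws_def]
  have ws: "set ws \<subseteq> carrier_vec n" "corthogonal ws" "length ws = n" 
    by (auto simp: len_b)
  from gram_schmidt_hd[OF v, of vs, folded bv] have hdws: "hd ws = v" unfolding ws_def .
  define us where "us = map nrm ws"
  define W where "W = mat_of_cols n us"
  have lus: "length us = n" unfolding us_def using ws by simp
  have W: "W \<in> carrier_mat n n" unfolding W_def using mat_of_cols_carrier(1)[of n us] lus by simp
  have wsi: "i < n \<Longrightarrow> ws ! i \<in> carrier_vec n" for i using ws by auto
  have wsi0: "i < n \<Longrightarrow> ws ! i \<noteq> 0\<^sub>v n" for i
    using ws corthogonalD[OF ws(2), of i i] wsi[of i] by auto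
  have Wij: "i < n \<Longrightarrow> j < n \<Longrightarrow> W $$ (i,j) = nrm (ws ! j) $ i" for i j
    unfolding W_def us_def using lus ws by (simp add: mat_of_cols_index)
  have "mat_adjoint W * W = 1\<^sub>m n"
  proof (rule eq_matI)
    fix i j assume "i < dim_row (1\<^sub>m n :: complex mat)" "j < dim_col (1\<^sub>m n :: complex mat)"
    then have ij: "i < n" "j < n" by auto
    have "(mat_adjoint W * W) $$ (i, j) = (\<Sum>k<n. nrm (ws ! j) $ k * cnj (nrm (ws ! i) $ k))"
      using W ij by (simp add: scalar_prod_def Wij lessThan_atLeast0 mult.commute)
    also have "\<dots> = nrm (ws ! j) \<bullet>c nrm (ws ! i)"
      using carrier_vecD[OF nrm_carrier[OF wsi[OF ij(1)]]] by (simp add: scalar_prod_def lessThan_atLeast0)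
    also have "\<dots> = 1\<^sub>m n $$ (i, j)"
    proof (cases "i = j")
      case True
      then show ?thesis using nrm_self[OF wsi[OF ij(1)] wsi0[OF ij(1)]] ij by simp
    next
      case False
      have "ws ! j \<bullet>c ws ! i = 0" using corthogonalD[OF ws(2), of j i] ij ws False by auto
      then show ?thesis using nrm_inner[OF wsi[OF ij(2)] wsi[OF ij(1)]] ij False by simp
    qed
    finally show "(mat_adjoint W * W) $$ (i, j) = 1\<^sub>m n $$ (i, j)" .
  qed (use W in auto)
  then have "unitary n W" using W unfolding unitary_def by auto
  moreover have "col W 0 = v"
  proof -
    have ws0: "ws ! 0 = v" using hdws ws n by (cases ws) auto
    show ?thesis
    proof (rule eq_vecI)
      fix i assume "i < dim_vec v"
      then have i: "i < n" using v by auto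
      show "col W 0 $ i = v $ i" using i n W Wij[OF i n] ws0 nrm_unit[OF vv] by simp
    qed (use W v n in auto)
  qed
  ultimately show ?thesis by blast
qed

lemma mult_if_zero: "(a::complex) * (if P then b else 0) = (if P then a * b else 0)" by simp

lemma udu_index: assumes U: "U \<in> carrier_mat n n" and ij: "i < n" "j < n"
  shows "(U * dmat n d * mat_adjoint U) $$ (i,j) = (\<Sum>k<n. U $$ (i,k) * complex_of_real (d k) * cnj (U $$ (j,k)))"
proof -
  have UD: "k < n \<Longrightarrow> (U * dmat n d) $$ (i,k) = U $$ (i,k) * complex_of_real (d k)" for k
    using U ij by (simp add: scalar_prod_def lessThan_atLeast0 mult_if_zero)
  have "(U * dmat n d * mat_adjoint U) $$ (i,j) = (\<Sum>k\<in>{0..<n}. row (U * dmat n d) i $ k * col (mat_adjoint U) j $ k)"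
    using U ij by (simp add: scalar_prod_def)
  also have "\<dots> = (\<Sum>k<n. U $$ (i,k) * complex_of_real (d k) * cnj (U $$ (j,k)))"
    unfolding lessThan_atLeast0 by (rule sum.cong) (use U ij UD in auto)
  finally show ?thesis .
qed

lemma mult_carrier_sq[simp]: "A \<in> carrier_mat n n \<Longrightarrow> B \<in> carrier_mat n n \<Longrightarrow> A * B \<in> carrier_mat n n"
  by simp

lemma adj_carrier_sq[simp]: "A \<in> carrier_mat n n \<Longrightarrow> mat_adjoint A \<in> carrier_mat n n"
  by simp

lemma unitary_cancel: assumes "unitary n U" "X \<in> carrier_mat n k"
  shows "mat_adjoint U * (U * X) = X" "U * (mat_adjoint U * X) = X"
proof -
  have U: "U \<in> carrier_mat n n" using assms unitary_def by auto
  have "mat_adjoint U * (U * X) = (mat_adjoint U * U) * X"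
    using U assms by (simp add: assoc_mult_mat[of _ n n U n X k])
  also have "\<dots> = X" using assms unfolding unitary_def by simp
  finally show "mat_adjoint U * (U * X) = X" .
  have "U * (mat_adjoint U * X) = (U * mat_adjoint U) * X"
    using U assms by (simp add: assoc_mult_mat[of U n n _ n X k])
  also have "\<dots> = X" using assms unitary_right[OF assms(1)] by simp
  finally show "U * (mat_adjoint U * X) = X" .
qed

theorem spectral:
  assumes "(A::complex mat) \<in> carrier_mat n n" "mat_adjoint A = A"
  shows "\<exists>U d. unitary n U \<and> A = U * dmat n d * mat_adjoint U"
  using assms
proof (induct n arbitrary: A)
  case 0
  have "unitary 0 (1\<^sub>m 0)" unfolding unitary_def by auto
  moreover have "A = 1\<^sub>m 0 * dmat 0 (\<lambda>_. 0) * mat_adjoint (1\<^sub>m 0)" using 0 by (intro eq_matI) auto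
  ultimately show ?case by blast
next
  case (Suc m A)
  define N where "N = Suc m"
  have A: "A \<in> carrier_mat N N" and hA: "mat_adjoint A = A" using Suc N_def by auto
  obtain e v where v: "v \<in> carrier_vec N" "v \<bullet>c v = 1" "A *\<^sub>v v = e \<cdot>\<^sub>v v"
    using exists_eigvec[OF A] N_def by auto
  obtain W where W: "unitary N W" "col W 0 = v" using unitary_completion[OF v(1,2)] by auto
  have Wc: "W \<in> carrier_mat N N" using W unitary_def by auto
  have aW: "mat_adjoint W \<in> carrier_mat N N" using Wc by simp
  define A' where "A' = mat_adjoint W * A * W"
  have A'c: "A' \<in> carrier_mat N N" unfolding A'_def using Wc aW A by (metis mult_carrier_mat)
  have hA': "mat_adjoint A' = A'"
  proof -
    have "mat_adjoint A' = mat_adjoint W * mat_adjoint (mat_adjoint W * A)"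
      unfolding A'_def by (rule adj_mult[of _ N N _ N]) (use Wc A in auto)
    also have "mat_adjoint (mat_adjoint W * A) = mat_adjoint A * W"
      by (subst adj_mult[of _ N N _ N]) (use Wc A in auto)
    finally show ?thesis unfolding A'_def hA using Wc aW A by (simp add: assoc_mult_mat[OF aW A Wc])
  qed
  have herm: "A' $$ (i,j) = cnj (A' $$ (j,i))" if "i < N" "j < N" for i j
  proof -
    have "A' $$ (i,j) = mat_adjoint A' $$ (i,j)" using hA' by simp
    also have "\<dots> = cnj (A' $$ (j,i))" using that A'c by simp
    finally show ?thesis .
  qed
  have N0: "0 < N" unfolding N_def by simp
  have col0: "A' $$ (i,0) = (if i = 0 then e else 0)" if i: "i < N" for i
  proof -
    have "col A' 0 = (mat_adjoint W * A) *\<^sub>v col W 0"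
      unfolding A'_def by (rule col_mult2[OF mult_carrier_mat[OF aW A] Wc N0])
    also have "\<dots> = mat_adjoint W *\<^sub>v (A *\<^sub>v v)"
      unfolding W(2) by (rule assoc_mult_mat_vec) (use aW A v in auto)
    also have "\<dots> = e \<cdot>\<^sub>v (mat_adjoint W *\<^sub>v v)"
      unfolding v(3) by (rule mult_mat_vec[OF aW v(1)])
    also have "mat_adjoint W *\<^sub>v v = unit_vec N 0"
      using unitary_col[OF W(1) N0] W(2) by simp
    finally have "col A' 0 = e \<cdot>\<^sub>v unit_vec N 0" .
    then have "col A' 0 $ i = (if i = 0 then e else 0)" using i by simp
    then show ?thesis using i A'c by simp
  qed
  have ereal: "e = complex_of_real (Re e)"
    using herm[OF N0 N0] col0[OF N0] by (simp add: complex_eq_iff)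
  have row0: "A' $$ (0,j) = (if j = 0 then e else 0)" if "j < N" for j
    using herm[OF N0 that] col0[OF that] ereal by (auto simp: complex_eq_iff)
  define B where "B = mat m m (\<lambda>(i,j). A' $$ (Suc i, Suc j))"
  have Bc: "B \<in> carrier_mat m m" unfolding B_def by simp
  have hB: "mat_adjoint B = B"
  proof (rule eq_matI)
    fix i j assume "i < dim_row B" "j < dim_col B"
    then have ij: "i < m" "j < m" unfolding B_def by auto
    then show "mat_adjoint B $$ (i, j) = B $$ (i, j)"
      using herm[of "Suc i" "Suc j"] unfolding B_def N_def by simp
  qed (auto simp: B_def)
  obtain U' d' where U': "unitary m U'" and BU: "B = U' * dmat m d' * mat_adjoint U'"
    using Suc.hyps[OF Bc hB] by auto
  have U'c: "U' \<in> carrier_mat m m" using U' unitary_def by auto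
  define E where "E = mat N N (\<lambda>(i,j). if i = 0 \<and> j = 0 then 1 else if i = 0 \<or> j = 0 then 0 else U' $$ (i - 1, j - 1))"
  define d where "d = (\<lambda>i. if i = 0 then Re e else d' (i - 1))"
  have Ec: "E \<in> carrier_mat N N" unfolding E_def by simp
  have EU: "unitary N E"
  proof -
    have "mat_adjoint E * E = 1\<^sub>m N"
    proof (rule eq_matI)
      fix i j assume "i < dim_row (1\<^sub>m N :: complex mat)" "j < dim_col (1\<^sub>m N :: complex mat)"
      then have ij: "i < N" "j < N" by auto
      have "(mat_adjoint E * E) $$ (i,j) = (\<Sum>k\<in>{0..<N}. cnj (E $$ (k,i)) * E $$ (k,j))"
        using Ec ij by (simp add: scalar_prod_def)
      also have "\<dots> = cnj (E $$ (0,i)) * E $$ (0,j) + (\<Sum>k<m. cnj (E $$ (Suc k,i)) * E $$ (Suc k,j))"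
        unfolding N_def lessThan_atLeast0[symmetric] by (rule sum.lessThan_Suc_shift)
      also have "\<dots> = 1\<^sub>m N $$ (i,j)"
      proof (cases i)
        case 0
        then show ?thesis using ij by (cases j) (auto simp: E_def N_def)
      next
        case (Suc i')
        note i = this
        show ?thesis
        proof (cases j)
          case 0
          then show ?thesis using ij i by (auto simp: E_def N_def)
        next
          case (Suc j')
          have "(\<Sum>k<m. cnj (E $$ (Suc k,i)) * E $$ (Suc k,j)) = (\<Sum>k<m. cnj (U' $$ (k,i')) * U' $$ (k,j'))"
            by (rule sum.cong) (use ij i Suc in \<open>auto simp: E_def N_def\<close>)
          also have "\<dots> = (mat_adjoint U' * U') $$ (i', j')"
            using U'c ij i Suc by (simp add: scalar_prod_def lessThan_atLeast0 N_def)
          also have "\<dots> = 1\<^sub>m N $$ (i,j)" using U' ij i Suc unfolding unitary_def N_def by simp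
          finally show ?thesis using ij i Suc by (simp add: E_def N_def)
        qed
      qed
      finally show "(mat_adjoint E * E) $$ (i, j) = 1\<^sub>m N $$ (i, j)" .
    qed (use Ec in auto)
    then show ?thesis using Ec unfolding unitary_def by auto
  qed
  have A'eq: "A' = E * dmat N d * mat_adjoint E"
  proof (rule eq_matI)
    fix i j assume "i < dim_row (E * dmat N d * mat_adjoint E)" "j < dim_col (E * dmat N d * mat_adjoint E)"
    then have ij: "i < N" "j < N" using Ec by auto
    have "(E * dmat N d * mat_adjoint E) $$ (i,j) = (\<Sum>k<N. E $$ (i,k) * complex_of_real (d k) * cnj (E $$ (j,k)))"
      by (rule udu_index[OF Ec ij])
    also have "\<dots> = E $$ (i,0) * complex_of_real (d 0) * cnj (E $$ (j,0))
        + (\<Sum>k<m. E $$ (i,Suc k) * complex_of_real (d (Suc k)) * cnj (E $$ (j,Suc k)))"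
      unfolding N_def by (rule sum.lessThan_Suc_shift)
    also have "\<dots> = A' $$ (i,j)"
    proof (cases i)
      case 0
      then show ?thesis using ij row0[OF ij(2)] ereal by (cases j) (auto simp: E_def N_def d_def)
    next
      case (Suc i')
      note i = this
      show ?thesis
      proof (cases j)
        case 0
        then show ?thesis using ij i col0[OF ij(1)] by (auto simp: E_def N_def)
      next
        case (Suc j')
        have "(\<Sum>k<m. E $$ (i,Suc k) * complex_of_real (d (Suc k)) * cnj (E $$ (j,Suc k)))
            = (\<Sum>k<m. U' $$ (i',k) * complex_of_real (d' k) * cnj (U' $$ (j',k)))"
          by (rule sum.cong) (use ij i Suc in \<open>auto simp: E_def N_def d_def\<close>)
        also have "\<dots> = B $$ (i', j')" unfolding BU
          by (rule udu_index[symmetric, OF U'c]) (use ij i Suc N_def in auto)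
        also have "\<dots> = A' $$ (i,j)" using ij i Suc unfolding B_def N_def by simp
        finally show ?thesis using ij i Suc by (simp add: E_def N_def)
      qed
    qed
    finally show "A' $$ (i, j) = (E * dmat N d * mat_adjoint E) $$ (i, j)" by simp
  qed (use Ec A'c in auto)
  have "W * A' * mat_adjoint W = W * (mat_adjoint W * (A * W)) * mat_adjoint W"
    unfolding A'_def by (simp add: assoc_mult_mat[OF aW A Wc])
  also have "W * (mat_adjoint W * (A * W)) = A * W"
    by (rule unitary_cancel(2)[OF W(1)]) (use A Wc in auto)
  also have "A * W * mat_adjoint W = A * (W * mat_adjoint W)" by (rule assoc_mult_mat[OF A Wc aW])
  also have "\<dots> = A" using unitary_right[OF W(1)] A by simp
  finally have "A = W * A' * mat_adjoint W" by simp
  also have "\<dots> = (W * E) * dmat N d * mat_adjoint (W * E)"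
    unfolding A'eq using Wc Ec aW adj_carrier[OF Ec] by (simp del: adj_carrier add: adj_mult[OF Wc Ec] assoc_mult_mat[of _ N N _ N _ N])
  finally have "A = (W * E) * dmat N d * mat_adjoint (W * E)" .
  moreover have "unitary N (W * E)" by (rule unitary_mult[OF W(1) EU])
  ultimately show ?case unfolding N_def by blast
qed

lemma add_uminus_mat: "(A :: complex mat) \<in> carrier_mat nr nc \<Longrightarrow> A + - A = 0\<^sub>m nr nc"
  by (intro eq_matI) auto

lemma uminus_zero_mat[simp]: "- (0\<^sub>m nr nc :: complex mat) = 0\<^sub>m nr nc"
  by (intro eq_matI) auto

lemma sylvester: assumes P: "(P::complex mat) \<in> carrier_mat m n" and Q: "Q \<in> carrier_mat n m"
  shows "det (1\<^sub>m m + P * Q) = det (1\<^sub>m n + Q * P)"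
proof -
  define M where "M = four_block_mat (1\<^sub>m m) (- P) Q (1\<^sub>m n)"
  define L where "L = four_block_mat (1\<^sub>m m) P (0\<^sub>m n m) (1\<^sub>m n)"
  have Mc: "M \<in> carrier_mat (m + n) (m + n)" unfolding M_def by simp
  have Lc: "L \<in> carrier_mat (m + n) (m + n)" unfolding L_def by simp
  have mP: "- P \<in> carrier_mat m n" using P by simp
  have "L * M = four_block_mat (1\<^sub>m m * 1\<^sub>m m + P * Q) (1\<^sub>m m * - P + P * 1\<^sub>m n)
      (0\<^sub>m n m * 1\<^sub>m m + 1\<^sub>m n * Q) (0\<^sub>m n m * - P + 1\<^sub>m n * 1\<^sub>m n)"
    unfolding L_def M_def by (rule mult_four_block_mat) (use P Q in auto)
  also have "\<dots> = four_block_mat (1\<^sub>m m + P * Q) (0\<^sub>m m n) Q (1\<^sub>m n)"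
    using P Q by (simp add: add_uminus_mat)
  finally have LM: "L * M = four_block_mat (1\<^sub>m m + P * Q) (0\<^sub>m m n) Q (1\<^sub>m n)" .
  have "M * L = four_block_mat (1\<^sub>m m * 1\<^sub>m m + - P * 0\<^sub>m n m) (1\<^sub>m m * P + - P * 1\<^sub>m n)
      (Q * 1\<^sub>m m + 1\<^sub>m n * 0\<^sub>m n m) (Q * P + 1\<^sub>m n * 1\<^sub>m n)"
    unfolding L_def M_def by (rule mult_four_block_mat) (use P Q in auto)
  also have "\<dots> = four_block_mat (1\<^sub>m m) (0\<^sub>m m n) Q (1\<^sub>m n + Q * P)"
    using P Q by (simp add: add_uminus_mat comm_add_mat[of "Q * P" n n])
  finally have hML: "M * L = four_block_mat (1\<^sub>m m) (0\<^sub>m m n) Q (1\<^sub>m n + Q * P)" .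
  have dL: "det L = 1" unfolding L_def
    by (subst det_four_block_mat_lower_left_zero[of _ m _ n]) (use P in auto)
  have "det (1\<^sub>m m + P * Q) = det (L * M)"
    unfolding LM by (subst det_four_block_mat_upper_right_zero[of _ m _ n]) (use P Q in auto)
  also have "\<dots> = det M" using det_mult[OF Lc Mc] dL by simp
  also have "\<dots> = det (M * L)" using det_mult[OF Mc Lc] dL by simp
  also have "\<dots> = det (1\<^sub>m n + Q * P)"
    unfolding hML by (subst det_four_block_mat_upper_right_zero[of _ m _ n]) (use P Q in auto)
  finally show ?thesis .
qed

lemma unitary_col_norm: assumes "unitary n U" "i < n" shows "col U i \<bullet>c col U i = 1"
proof -
  have U: "U \<in> carrier_mat n n" using assms unitary_def by auto
  have "col U i \<bullet>c col U i = (mat_adjoint U * U) $$ (i,i)"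
    using U assms(2) by (simp add: scalar_prod_def mult.commute)
  also have "\<dots> = 1" using assms unfolding unitary_def by simp
  finally show ?thesis .
qed

lemma qf_conj: assumes S: "(S::complex mat) \<in> carrier_mat n n" and X: "X \<in> carrier_mat n n" and c: "c \<in> carrier_vec n"
  shows "((mat_adjoint S * X * S) *\<^sub>v c) \<bullet>c c = (X *\<^sub>v (S *\<^sub>v c)) \<bullet>c (S *\<^sub>v c)"
proof -
  have "(mat_adjoint S * X * S) *\<^sub>v c = mat_adjoint S *\<^sub>v (X *\<^sub>v (S *\<^sub>v c))"
    by (rule mat3_vec) (use S X c in auto)
  also have "\<dots> \<bullet>c c = (X *\<^sub>v (S *\<^sub>v c)) \<bullet>c (mat_adjoint (mat_adjoint S) *\<^sub>v c)"
    by (rule adj_inner) (use S X c in auto)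
  finally show ?thesis by simp
qed

lemma diag_conj: assumes Q: "(Q::complex mat) \<in> carrier_mat n n" and F: "F \<in> carrier_mat n n" and i: "i < n"
  shows "(mat_adjoint Q * F * Q) $$ (i,i) = (F *\<^sub>v col Q i) \<bullet>c col Q i"
proof -
  have "(mat_adjoint Q * F * Q) $$ (i,i) = (mat_adjoint Q * (F * Q)) $$ (i,i)"
    using Q F by (simp add: assoc_mult_mat[of _ n n F n Q n])
  also have "\<dots> = (\<Sum>k\<in>{0..<n}. cnj (Q $$ (k,i)) * (F * Q) $$ (k,i))"
    using Q F i by (simp add: scalar_prod_def)
  also have "\<dots> = (\<Sum>k\<in>{0..<n}. (F *\<^sub>v col Q i) $ k * cnj (col Q i $ k))"
    by (rule sum.cong) (use Q F i in \<open>auto simp: mult.commute\<close>)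
  also have "\<dots> = (F *\<^sub>v col Q i) \<bullet>c col Q i"
    using Q by (simp add: scalar_prod_def)
  finally show ?thesis .
qed

lemma tr_conj: assumes Q: "(Q::complex mat) \<in> carrier_mat n n" and F: "F \<in> carrier_mat n n"
  shows "mat_trace (mat_adjoint Q * F * Q) = (\<Sum>i<n. (F *\<^sub>v col Q i) \<bullet>c col Q i)"
proof -
  have "mat_trace (mat_adjoint Q * F * Q) = (\<Sum>i<n. (mat_adjoint Q * F * Q) $$ (i,i))"
    unfolding mat_trace_def using Q F by simp
  also have "\<dots> = (\<Sum>i<n. (F *\<^sub>v col Q i) \<bullet>c col Q i)"
    by (rule sum.cong) (use Q F diag_conj in auto)
  finally show ?thesis .
qed

lemma tr_unitary: assumes Q: "unitary n Q" and F: "(F::complex mat) \<in> carrier_mat n n"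
  shows "mat_trace (mat_adjoint Q * F * Q) = mat_trace F"
proof -
  have Qc: "Q \<in> carrier_mat n n" using Q unitary_def by auto
  have "mat_trace (mat_adjoint Q * F * Q) = mat_trace (mat_adjoint Q * (F * Q))"
    using Qc F by (simp add: assoc_mult_mat[of _ n n F n Q n])
  also have "\<dots> = mat_trace ((F * Q) * mat_adjoint Q)"
    by (rule mat_trace_comm[of _ n n]) (use Qc F in auto)
  also have "(F * Q) * mat_adjoint Q = F * (Q * mat_adjoint Q)"
    by (rule assoc_mult_mat[of _ n n _ n _ n]) (use Qc F in auto)
  also have "\<dots> = F" using unitary_right[OF Q] F by simp
  finally show ?thesis .
qed

lemma det_udu: assumes U: "unitary n U"
  shows "det (U * dmat n d * mat_adjoint U) = complex_of_real (\<Prod>i<n. d i)"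
proof -
  have Uc: "U \<in> carrier_mat n n" using U unitary_def by auto
  have "det (U * dmat n d * mat_adjoint U) = det U * det (dmat n d) * det (mat_adjoint U)"
    using Uc by (simp add: det_mult[of _ n])
  also have "\<dots> = det (dmat n d) * (det (mat_adjoint U) * det U)" by (simp add: mult_ac)
  also have "det (mat_adjoint U) * det U = det (mat_adjoint U * U)"
    using Uc by (simp add: det_mult[of _ n])
  also have "\<dots> = 1" using U unfolding unitary_def by simp
  finally show ?thesis by (simp add: det_dmat)
qed

lemma qf_udu_col: assumes U: "unitary n U" and i: "i < n"
  shows "((U * dmat n d * mat_adjoint U) *\<^sub>v col U i) \<bullet>c col U i = complex_of_real (d i)"
proof -
  have Uc: "U \<in> carrier_mat n n" using U unitary_def by auto
  have "((U * dmat n d * mat_adjoint U) *\<^sub>v col U i) \<bullet>c col U i = complex_of_real (d i) * (col U i \<bullet>c col U i)"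
    unfolding eigen_of_udu[OF U i] by (rule cscalar_smult_left[of _ n]) (use Uc i in auto)
  then show ?thesis using unitary_col_norm[OF U i] by simp
qed

lemma qf_add_one: assumes X: "(X::complex mat) \<in> carrier_mat n n" and z: "z \<in> carrier_vec n"
  shows "((1\<^sub>m n + X) *\<^sub>v z) \<bullet>c z = z \<bullet>c z + (X *\<^sub>v z) \<bullet>c z"
proof -
  have "(1\<^sub>m n + X) *\<^sub>v z = z + X *\<^sub>v z"
    using X z by (simp add: add_mult_distrib_mat_vec[of _ n n])
  then show ?thesis using X z by (simp add: add_scalar_prod_distrib[of _ n])
qed

lemma dmat_one: "dmat n (\<lambda>_. 1) = 1\<^sub>m n"
  by (intro eq_matI) auto

lemma col_dmat: assumes V: "(V::complex mat) \<in> carrier_mat n n" and i: "i < n"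
  shows "col (V * dmat n d) i = complex_of_real (d i) \<cdot>\<^sub>v col V i"
proof -
  have "col (V * dmat n d) i = V *\<^sub>v col (dmat n d) i" by (rule col_mult2[OF V dmat_carrier i])
  also have "col (dmat n d) i = complex_of_real (d i) \<cdot>\<^sub>v unit_vec n i"
    using i by (intro eq_vecI) auto
  also have "V *\<^sub>v \<dots> = complex_of_real (d i) \<cdot>\<^sub>v col V i"
    using V i by (simp add: mult_mat_vec[OF V] mat_unit_vec)
  finally show ?thesis .
qed

lemma qf_smult: assumes E: "(E::complex mat) \<in> carrier_mat n n" and v: "v \<in> carrier_vec n"
  shows "(E *\<^sub>v (complex_of_real a \<cdot>\<^sub>v v)) \<bullet>c (complex_of_real a \<cdot>\<^sub>v v) = complex_of_real (a * a) * ((E *\<^sub>v v) \<bullet>c v)"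
proof -
  have "E *\<^sub>v (complex_of_real a \<cdot>\<^sub>v v) = complex_of_real a \<cdot>\<^sub>v (E *\<^sub>v v)" by (rule mult_mat_vec[OF E v])
  then show ?thesis using E v by (simp add: cscalar_smult_left[of _ n] cscalar_smult_right[of _ n])
qed

lemma det_ineq:
  fixes A B E :: "complex mat"
  assumes A: "A \<in> carrier_mat n n" and B: "B \<in> carrier_mat n n" and E: "E \<in> carrier_mat n n"
  and hA: "mat_adjoint A = A" and hB: "mat_adjoint B = B"
  and pA: "\<And>x. x \<in> carrier_vec n \<Longrightarrow> Re ((A *\<^sub>v x) \<bullet>c x) \<ge> 0"
  and pB: "\<And>x. x \<in> carrier_vec n \<Longrightarrow> Re ((B *\<^sub>v x) \<bullet>c x) \<ge> 0"
  and pE: "\<And>x. x \<in> carrier_vec n \<Longrightarrow> Re ((E *\<^sub>v x) \<bullet>c x) \<ge> 0"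
  and le: "\<And>x. x \<in> carrier_vec n \<Longrightarrow> Re ((A *\<^sub>v x) \<bullet>c x) \<le> Re ((B *\<^sub>v x) \<bullet>c x) + Re ((E *\<^sub>v x) \<bullet>c x)"
  shows "ln (Re (det (1\<^sub>m n + A))) - ln (Re (det (1\<^sub>m n + B))) \<le> Re (mat_trace E)"
proof -
  define IB where "IB = 1\<^sub>m n + B"
  have IBc: "IB \<in> carrier_mat n n" unfolding IB_def using B by simp
  have hIB: "mat_adjoint IB = IB" unfolding IB_def using B hB by (simp add: adj_add[of _ n n])
  obtain V lam where V: "unitary n V" and IBeq: "IB = V * dmat n lam * mat_adjoint V"
    using spectral[OF IBc hIB] by auto
  have Vc: "V \<in> carrier_mat n n" using V unitary_def by auto
  have lam1: "lam i \<ge> 1" if i: "i < n" for i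
  proof -
    have "complex_of_real (lam i) = (IB *\<^sub>v col V i) \<bullet>c col V i"
      unfolding IBeq by (rule qf_udu_col[OF V i, symmetric])
    also have "\<dots> = 1 + (B *\<^sub>v col V i) \<bullet>c col V i"
      unfolding IB_def by (subst qf_add_one[OF B]) (use Vc i unitary_col_norm[OF V i] in auto)
    finally have "lam i = 1 + Re ((B *\<^sub>v col V i) \<bullet>c col V i)"
      by (metis Re_complex_of_real one_complex.sel(1) plus_complex.sel(1))
    then show ?thesis using pB[of "col V i"] Vc i by simp
  qed
  define mu where "mu i = 1 / sqrt (lam i)" for i
  have mulam: "mu i * (lam i * mu i) = 1" if "i < n" for i
    using lam1[OF that] unfolding mu_def by (simp add: field_simps)
  have mu1: "mu i * mu i \<le> 1" if "i < n" for i
    using lam1[OF that] unfolding mu_def by (simp add: field_simps)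
  define S where "S = V * dmat n mu"
  have Sc: "S \<in> carrier_mat n n" unfolding S_def using Vc by simp
  have aS: "mat_adjoint S = dmat n mu * mat_adjoint V"
    unfolding S_def by (simp add: adj_mult[OF Vc dmat_carrier])
  have SIS: "mat_adjoint S * IB * S = 1\<^sub>m n"
  proof -
    have "mat_adjoint S * IB * S = dmat n mu * (mat_adjoint V * (V * (dmat n lam * (mat_adjoint V * (V * dmat n mu)))))"
      unfolding IBeq S_def using Vc by (simp add: adj_mult[OF Vc dmat_carrier] assoc_mult_mat[of _ n n _ n _ n])
    also have "\<dots> = dmat n mu * (dmat n lam * dmat n mu)"
      using Vc by (simp add: unitary_cancel(1)[OF V, of "dmat n mu" n] unitary_cancel(1)[OF V, of "dmat n lam * dmat n mu" n])
    also have "\<dots> = dmat n (\<lambda>_. 1)"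
      unfolding dmat_mult by (intro eq_matI) (auto simp: mulam)
    finally show ?thesis by (simp add: dmat_one)
  qed
  define IA where "IA = 1\<^sub>m n + A"
  have IAc: "IA \<in> carrier_mat n n" unfolding IA_def using A by simp
  have hIA: "mat_adjoint IA = IA" unfolding IA_def using A hA by (simp add: adj_add[of _ n n])
  define M where "M = mat_adjoint S * IA * S"
  have Mc: "M \<in> carrier_mat n n" unfolding M_def using Sc IAc by simp
  have hM: "mat_adjoint M = M"
  proof -
    have "mat_adjoint M = mat_adjoint S * mat_adjoint (mat_adjoint S * IA)"
      unfolding M_def by (rule adj_mult[of _ n n _ n]) (use Sc IAc in auto)
    also have "mat_adjoint (mat_adjoint S * IA) = IA * S"
      by (subst adj_mult[of _ n n _ n]) (use Sc IAc hIA in auto)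
    finally show ?thesis unfolding M_def using Sc IAc by (simp add: assoc_mult_mat[of _ n n _ n _ n])
  qed
  obtain W gam where W: "unitary n W" and Meq: "M = W * dmat n gam * mat_adjoint W"
    using spectral[OF Mc hM] by auto
  have Wc: "W \<in> carrier_mat n n" using W unitary_def by auto
  have d1: "det (mat_adjoint S) * det IB * det S = 1"
  proof -
    have "det (mat_adjoint S * IB * S) = det (mat_adjoint S) * det IB * det S"
      using Sc IBc by (simp add: det_mult[of _ n])
    then show ?thesis using SIS by simp
  qed
  have dM: "det M = det (mat_adjoint S) * det IA * det S"
    unfolding M_def using Sc IAc by (simp add: det_mult[of _ n])
  have dIA: "det IA = det IB * det M"
  proof -
    have "det IA = det IA * (det (mat_adjoint S) * det IB * det S)" using d1 by simp
    also have "\<dots> = det IB * det M" unfolding dM by (simp add: mult_ac)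
    finally show ?thesis .
  qed
  have dIB: "det IB = complex_of_real (\<Prod>i<n. lam i)" unfolding IBeq by (rule det_udu[OF V])
  have dM': "det M = complex_of_real (\<Prod>i<n. gam i)" unfolding Meq by (rule det_udu[OF W])
  define e where "e i = Re ((E *\<^sub>v (S *\<^sub>v col W i)) \<bullet>c (S *\<^sub>v col W i))" for i
  have gam_bnd: "0 \<le> gam i \<and> gam i \<le> 1 + e i" if i: "i < n" for i
  proof -
    define c where "c = col W i"
    define z where "z = S *\<^sub>v c"
    have c: "c \<in> carrier_vec n" unfolding c_def using Wc i by simp
    have z: "z \<in> carrier_vec n" unfolding z_def using Sc c by simp
    have "complex_of_real (gam i) = (M *\<^sub>v c) \<bullet>c c"
      unfolding Meq c_def by (rule qf_udu_col[OF W i, symmetric])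
    also have "\<dots> = (IA *\<^sub>v z) \<bullet>c z" unfolding M_def z_def by (rule qf_conj[OF Sc IAc c])
    also have "\<dots> = z \<bullet>c z + (A *\<^sub>v z) \<bullet>c z" unfolding IA_def by (rule qf_add_one[OF A z])
    finally have g: "gam i = Re (z \<bullet>c z) + Re ((A *\<^sub>v z) \<bullet>c z)"
      by (metis Re_complex_of_real plus_complex.sel(1))
    have "1 = c \<bullet>c c" unfolding c_def using unitary_col_norm[OF W i] by simp
    also have "\<dots> = ((mat_adjoint S * IB * S) *\<^sub>v c) \<bullet>c c" unfolding SIS using c by simp
    also have "\<dots> = (IB *\<^sub>v z) \<bullet>c z" unfolding z_def by (rule qf_conj[OF Sc IBc c])
    also have "\<dots> = z \<bullet>c z + (B *\<^sub>v z) \<bullet>c z" unfolding IB_def by (rule qf_add_one[OF B z])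
    finally have o: "1 = Re (z \<bullet>c z) + Re ((B *\<^sub>v z) \<bullet>c z)"
      by (metis Re_complex_of_real one_complex.sel(1) plus_complex.sel(1))
    have "e i = Re ((E *\<^sub>v z) \<bullet>c z)" unfolding e_def z_def c_def ..
    then show ?thesis using g o le[OF z] pA[OF z] cnorm_nonneg[of z] by linarith
  qed
  have e0: "e i \<ge> 0" if "i < n" for i unfolding e_def by (rule pE) (use Sc Wc that in simp)
  have sum_e: "(\<Sum>i<n. e i) \<le> Re (mat_trace E)"
  proof -
    define F where "F = mat_adjoint S * E * S"
    have Fc: "F \<in> carrier_mat n n" unfolding F_def using Sc E by simp
    have "(\<Sum>i<n. e i) = Re (\<Sum>i<n. (F *\<^sub>v col W i) \<bullet>c col W i)"
      unfolding e_def Re_sum F_def by (rule sum.cong) (use qf_conj[OF Sc E] Wc in auto)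
    also have "(\<Sum>i<n. (F *\<^sub>v col W i) \<bullet>c col W i) = mat_trace (mat_adjoint W * F * W)"
      by (rule tr_conj[OF Wc Fc, symmetric])
    also have "\<dots> = mat_trace F" by (rule tr_unitary[OF W Fc])
    also have "\<dots> = (\<Sum>i<n. (E *\<^sub>v col S i) \<bullet>c col S i)" unfolding F_def by (rule tr_conj[OF Sc E])
    also have "Re \<dots> = (\<Sum>i<n. mu i * mu i * Re ((E *\<^sub>v col V i) \<bullet>c col V i))"
      unfolding Re_sum S_def by (rule sum.cong) (use Vc E in \<open>auto simp: col_dmat qf_smult\<close>)
    also have "\<dots> \<le> (\<Sum>i<n. Re ((E *\<^sub>v col V i) \<bullet>c col V i))"
    proof (rule sum_mono)
      fix i assume "i \<in> {..<n}"
      then have i: "i < n" by simp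
      have "Re ((E *\<^sub>v col V i) \<bullet>c col V i) \<ge> 0" by (rule pE) (use Vc i in simp)
      then show "mu i * mu i * Re ((E *\<^sub>v col V i) \<bullet>c col V i) \<le> Re ((E *\<^sub>v col V i) \<bullet>c col V i)"
        using mu1[OF i] by (simp add: mult_left_le_one_le)
    qed
    also have "\<dots> = Re (mat_trace (mat_adjoint V * E * V))" unfolding tr_conj[OF Vc E] Re_sum ..
    also have "\<dots> = Re (mat_trace E)" by (simp add: tr_unitary[OF V E])
    finally show ?thesis .
  qed
  have "det (1\<^sub>m n + A) = complex_of_real ((\<Prod>i<n. lam i) * (\<Prod>i<n. gam i))"
    using dIA dIB dM' unfolding IA_def by (simp only: of_real_mult)
  then have RA: "Re (det (1\<^sub>m n + A)) = (\<Prod>i<n. lam i) * (\<Prod>i<n. gam i)"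
    by (simp only: Re_complex_of_real)
  have RB: "Re (det (1\<^sub>m n + B)) = (\<Prod>i<n. lam i)"
    using dIB unfolding IB_def by (simp only: Re_complex_of_real)
  have Lpos: "(\<Prod>i<n. lam i) > 0" by (rule prod_pos) (use lam1 in fastforce)
  have Gnn: "(\<Prod>i<n. gam i) \<ge> 0" by (rule prod_nonneg) (use gam_bnd in blast)
  have Gle: "(\<Prod>i<n. gam i) \<le> exp (\<Sum>i<n. e i)"
  proof -
    have "(\<Prod>i<n. gam i) \<le> (\<Prod>i<n. exp (e i))"
    proof (rule prod_mono)
      fix i assume "i \<in> {..<n}"
      then have i: "i < n" by simp
      have "1 + e i \<le> exp (e i)" by (rule exp_ge_add_one_self)
      then show "0 \<le> gam i \<and> gam i \<le> exp (e i)" using gam_bnd[OF i] by linarith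
    qed
    also have "\<dots> = exp (\<Sum>i<n. e i)" by (simp add: exp_sum)
    finally show ?thesis .
  qed
  show ?thesis
  proof (cases "(\<Prod>i<n. gam i) = 0")
    case True
    have "(\<Prod>i<n. lam i) \<ge> 1" by (rule prod_ge_1) (use lam1 in auto)
    then have "ln (\<Prod>i<n. lam i) \<ge> 0" by simp
    moreover have "(\<Sum>i<n. e i) \<ge> 0" by (rule sum_nonneg) (use e0 in auto)
    ultimately show ?thesis unfolding RA RB True using sum_e by (simp del: prod_zero_iff)
  next
    case False
    then have Gpos: "(\<Prod>i<n. gam i) > 0" using Gnn by (simp del: prod_zero_iff)
    have "ln ((\<Prod>i<n. lam i) * (\<Prod>i<n. gam i)) - ln (\<Prod>i<n. lam i) = ln (\<Prod>i<n. gam i)"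
      using Lpos Gpos by (simp add: ln_mult del: prod_zero_iff)
    also have "\<dots> \<le> (\<Sum>i<n. e i)" using Gle Gpos by (metis ln_exp ln_le_cancel_iff exp_gt_zero)
    finally show ?thesis unfolding RA RB using sum_e by simp
  qed
qed

lemma smat_mv: "X \<in> carrier_mat m n \<Longrightarrow> x \<in> carrier_vec n \<Longrightarrow> (c \<cdot>\<^sub>m X) *\<^sub>v x = (c::complex) \<cdot>\<^sub>v (X *\<^sub>v x)"
  by (intro eq_vecI) (auto simp: scalar_prod_def sum_distrib_left mult.assoc)

lemma qf_smat: assumes "X \<in> carrier_mat n n" "x \<in> carrier_vec n"
  shows "((c \<cdot>\<^sub>m X) *\<^sub>v x) \<bullet>c x = (c::complex) * ((X *\<^sub>v x) \<bullet>c x)"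
  using assms by (simp add: smat_mv[OF assms] cscalar_smult_left[of _ n])

lemma qf_minus: assumes X: "(X::complex mat) \<in> carrier_mat n n" and Y: "Y \<in> carrier_mat n n" and x: "x \<in> carrier_vec n"
  shows "((X - Y) *\<^sub>v x) \<bullet>c x = (X *\<^sub>v x) \<bullet>c x - (Y *\<^sub>v x) \<bullet>c x"
proof -
  have "(X - Y) *\<^sub>v x = X *\<^sub>v x - Y *\<^sub>v x" by (rule minus_mult_distrib_mat_vec[OF X Y x])
  then show ?thesis using X Y x by (simp add: minus_scalar_prod_distrib[of _ n])
qed

lemma qf_gram: assumes H: "(H::complex mat) \<in> carrier_mat m n" and x: "x \<in> carrier_vec n"
  shows "((mat_adjoint H * H) *\<^sub>v x) \<bullet>c x = (H *\<^sub>v x) \<bullet>c (H *\<^sub>v x)"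
proof -
  have "(mat_adjoint H * H) *\<^sub>v x = mat_adjoint H *\<^sub>v (H *\<^sub>v x)"
    by (rule assoc_mult_mat_vec) (use H x in auto)
  also have "\<dots> \<bullet>c x = (H *\<^sub>v x) \<bullet>c (mat_adjoint (mat_adjoint H) *\<^sub>v x)"
    by (rule adj_inner) (use H x in auto)
  finally show ?thesis by simp
qed

lemma adj_conj_herm: assumes L: "(L::complex mat) \<in> carrier_mat n n" and G: "G \<in> carrier_mat n n"
  and hG: "mat_adjoint G = G"
  shows "mat_adjoint (mat_adjoint L * G * L) = mat_adjoint L * G * L"
proof -
  have "mat_adjoint (mat_adjoint L * G * L) = mat_adjoint L * mat_adjoint (mat_adjoint L * G)"
    by (rule adj_mult[of _ n n _ n]) (use L G in auto)
  also have "mat_adjoint (mat_adjoint L * G) = G * L"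
    by (subst adj_mult[of _ n n _ n]) (use L G hG in auto)
  finally show ?thesis using L G by (simp add: assoc_mult_mat[of _ n n _ n _ n])
qed

lemma adj_smult_real: "mat_adjoint (complex_of_real c \<cdot>\<^sub>m X) = complex_of_real c \<cdot>\<^sub>m mat_adjoint X"
  by (simp add: adj_smult)

lemma det_1x1: assumes "(A::complex mat) \<in> carrier_mat 1 1" shows "det A = A $$ (0,0)"
proof -
  have "det A = prod_list (diag_mat A)" by (rule det_upper_triangular) (use assms in \<open>auto simp: upper_triangular_def\<close>)
  then show ?thesis using assms by (simp add: diag_mat_def)
qed

definition outer :: "nat \<Rightarrow> complex vec \<Rightarrow> complex mat" where
  "outer n u = mat n n (\<lambda>(i,j). u $ i * cnj (u $ j))"

lemma outer_carrier[simp]: "outer n u \<in> carrier_mat n n" unfolding outer_def by simp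

lemma outer_fact: assumes u: "u \<in> carrier_vec n"
  shows "outer n u = mat_of_cols n [u] * mat_adjoint (mat_of_cols n [u])"
  by (intro eq_matI) (use u in \<open>auto simp: outer_def scalar_prod_def mat_of_cols_index\<close>)

lemma rank_one_det: assumes H: "(H::complex mat) \<in> carrier_mat m n" and u: "u \<in> carrier_vec n"
  shows "det (1\<^sub>m m + complex_of_real c \<cdot>\<^sub>m (H * outer n u * mat_adjoint H))
     = 1 + complex_of_real c * ((H *\<^sub>v u) \<bullet>c (H *\<^sub>v u))"
proof -
  define V where "V = mat_of_cols n [u]"
  have Vc: "V \<in> carrier_mat n 1" unfolding V_def using mat_of_cols_carrier(1)[of n "[u]"] by simp
  define P where "P = H * V"
  define Q where "Q = complex_of_real c \<cdot>\<^sub>m mat_adjoint P"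
  have Pc: "P \<in> carrier_mat m 1" unfolding P_def using H Vc by simp
  have Qc: "Q \<in> carrier_mat 1 m" unfolding Q_def using Pc by simp
  have "complex_of_real c \<cdot>\<^sub>m (H * outer n u * mat_adjoint H) = P * Q"
  proof -
    have "H * outer n u * mat_adjoint H = H * (V * mat_adjoint V) * mat_adjoint H"
      unfolding V_def using outer_fact[OF u] by simp
    also have "\<dots> = H * ((V * mat_adjoint V) * mat_adjoint H)"
      by (rule assoc_mult_mat) (use H Vc in auto)
    also have "(V * mat_adjoint V) * mat_adjoint H = V * (mat_adjoint V * mat_adjoint H)"
      by (rule assoc_mult_mat) (use H Vc in auto)
    also have "H * (V * (mat_adjoint V * mat_adjoint H)) = (H * V) * (mat_adjoint V * mat_adjoint H)"
      by (rule assoc_mult_mat[symmetric]) (use H Vc in auto)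
    also have "\<dots> = P * mat_adjoint P" unfolding P_def by (simp add: adj_mult[OF H Vc])
    finally show ?thesis unfolding Q_def using Pc by (simp add: mult_smult_distrib[of _ m 1 _ m])
  qed
  then have "det (1\<^sub>m m + complex_of_real c \<cdot>\<^sub>m (H * outer n u * mat_adjoint H)) = det (1\<^sub>m 1 + Q * P)"
    using sylvester[OF Pc Qc] by simp
  also have "\<dots> = (1\<^sub>m 1 + Q * P) $$ (0,0)" by (rule det_1x1) (use Pc Qc in simp)
  also have "\<dots> = 1 + complex_of_real c * (col P 0 \<bullet>c col P 0)"
    unfolding Q_def using Pc by (simp add: scalar_prod_def sum_distrib_left mult_ac)
  also have "col P 0 = H *\<^sub>v u" unfolding P_def V_def using H u
    by (simp add: col_mult2[OF H, of _ 1] mat_of_cols_carrier(1)[of n "[u]", simplified] col_mat_of_cols)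
  finally show ?thesis .
qed

lemma dmat_cong: "(\<And>i. i < n \<Longrightarrow> a i = b i) \<Longrightarrow> dmat n a = dmat n b"
  by (intro eq_matI) auto

lemma trace_smult: assumes "X \<in> carrier_mat n n" shows "mat_trace (c \<cdot>\<^sub>m X) = c * mat_trace X"
  unfolding mat_trace_def sum_distrib_left by (rule sum.cong) (use assms in auto)

lemma logdet_sylv: assumes H: "(H::complex mat) \<in> carrier_mat m n" and L: "L \<in> carrier_mat n n"
  shows "det (1\<^sub>m m + r \<cdot>\<^sub>m (H * (L * mat_adjoint L) * mat_adjoint H))
       = det (1\<^sub>m n + r \<cdot>\<^sub>m (mat_adjoint L * (mat_adjoint H * H) * L))"
proof -
  define P where "P = H * L"
  define Q where "Q = r \<cdot>\<^sub>m (mat_adjoint L * mat_adjoint H)"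
  have aL: "mat_adjoint L \<in> carrier_mat n n" and aH: "mat_adjoint H \<in> carrier_mat n m" using L H by auto
  have Pc: "P \<in> carrier_mat m n" unfolding P_def using H L by simp
  have Qc: "Q \<in> carrier_mat n m" unfolding Q_def using aL aH by simp
  have "H * (L * mat_adjoint L) * mat_adjoint H = (H * L) * (mat_adjoint L * mat_adjoint H)"
  proof -
    have "H * (L * mat_adjoint L) * mat_adjoint H = H * ((L * mat_adjoint L) * mat_adjoint H)"
      by (rule assoc_mult_mat) (use H L aL aH in auto)
    also have "(L * mat_adjoint L) * mat_adjoint H = L * (mat_adjoint L * mat_adjoint H)"
      by (rule assoc_mult_mat) (use H L aL aH in auto)
    also have "H * (L * (mat_adjoint L * mat_adjoint H)) = (H * L) * (mat_adjoint L * mat_adjoint H)"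
      by (rule assoc_mult_mat[symmetric]) (use H L aL aH in auto)
    finally show ?thesis .
  qed
  moreover have "P * Q = r \<cdot>\<^sub>m (P * (mat_adjoint L * mat_adjoint H))"
    unfolding Q_def by (rule mult_smult_distrib[OF Pc mult_carrier_mat[OF aL aH]])
  ultimately have PQ: "r \<cdot>\<^sub>m (H * (L * mat_adjoint L) * mat_adjoint H) = P * Q"
    unfolding P_def by simp
  have "mat_adjoint L * (mat_adjoint H * H) * L = (mat_adjoint L * mat_adjoint H) * (H * L)"
  proof -
    have "mat_adjoint L * (mat_adjoint H * H) * L = mat_adjoint L * ((mat_adjoint H * H) * L)"
      by (rule assoc_mult_mat) (use H L aL aH in auto)
    also have "(mat_adjoint H * H) * L = mat_adjoint H * (H * L)"
      by (rule assoc_mult_mat) (use H L aL aH in auto)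
    also have "mat_adjoint L * (mat_adjoint H * (H * L)) = (mat_adjoint L * mat_adjoint H) * (H * L)"
      by (rule assoc_mult_mat[symmetric]) (use H L aL aH in auto)
    finally show ?thesis .
  qed
  moreover have "Q * P = r \<cdot>\<^sub>m ((mat_adjoint L * mat_adjoint H) * P)"
    unfolding Q_def by (rule mult_smult_assoc_mat[OF mult_carrier_mat[OF aL aH] Pc])
  ultimately have QP: "r \<cdot>\<^sub>m (mat_adjoint L * (mat_adjoint H * H) * L) = Q * P"
    unfolding P_def by simp
  show ?thesis unfolding PQ QP by (rule sylvester[OF Pc Qc])
qed

lemma gram_herm: "(H::complex mat) \<in> carrier_mat m n \<Longrightarrow> mat_adjoint (mat_adjoint H * H) = mat_adjoint H * H"
  by (subst adj_mult[of _ n m _ n]) auto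

lemma rate_upper:
  fixes Hm He :: "complex mat"
  assumes Hm: "Hm \<in> carrier_mat nR nT" and He: "He \<in> carrier_mat nE nT"
  and Nm: "Nm > 0" and Ne: "Ne > 0"
  and Phi: "Phi = mat_adjoint Hm * Hm - complex_of_real (Nm / Ne) \<cdot>\<^sub>m (mat_adjoint He * He)"
  and c: "c \<ge> 0"
  and ray: "\<And>w. w \<in> carrier_vec nT \<Longrightarrow> Re ((Phi *\<^sub>v w) \<bullet>c w) \<le> c * Re (w \<bullet>c w)"
  and K: "psd_mat nT K"
  shows "secrecy_rate Hm He Nm Ne K \<le> c * Re (mat_trace K) / Nm"
proof -
  have Kc: "K \<in> carrier_mat nT nT" and hK: "mat_adjoint K = K"
    and pK: "\<And>v. v \<in> carrier_vec nT \<Longrightarrow> 0 \<le> Re ((K *\<^sub>v v) \<bullet>c v)" using K unfolding psd_mat_def by auto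
  obtain Q k where Q: "unitary nT Q" and Keq: "K = Q * dmat nT k * mat_adjoint Q"
    using spectral[OF Kc hK] by auto
  have Qc: "Q \<in> carrier_mat nT nT" using Q unitary_def by auto
  have k0: "k i \<ge> 0" if i: "i < nT" for i
  proof -
    have "complex_of_real (k i) = (K *\<^sub>v col Q i) \<bullet>c col Q i" unfolding Keq by (rule qf_udu_col[OF Q i, symmetric])
    then have "k i = Re ((K *\<^sub>v col Q i) \<bullet>c col Q i)" by (metis Re_complex_of_real)
    then show ?thesis using pK[of "col Q i"] Qc i by simp
  qed
  define s where "s i = sqrt (k i)" for i
  define L where "L = Q * dmat nT s"
  have Lc: "L \<in> carrier_mat nT nT" unfolding L_def using Qc by simp
  have aL: "mat_adjoint L \<in> carrier_mat nT nT" using Lc by simp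
  have KL: "K = L * mat_adjoint L"
  proof -
    have "L * mat_adjoint L = Q * (dmat nT s * (dmat nT s * mat_adjoint Q))"
      unfolding L_def using Qc by (simp add: adj_mult[OF Qc dmat_carrier] assoc_mult_mat[of _ nT nT _ nT _ nT])
    also have "dmat nT s * (dmat nT s * mat_adjoint Q) = (dmat nT s * dmat nT s) * mat_adjoint Q"
      by (rule assoc_mult_mat[symmetric]) (use Qc in auto)
    also have "dmat nT s * dmat nT s = dmat nT k"
      unfolding dmat_mult by (rule dmat_cong) (use k0 in \<open>simp add: s_def\<close>)
    also have "Q * (dmat nT k * mat_adjoint Q) = K" unfolding Keq
      by (rule assoc_mult_mat[symmetric]) (use Qc in auto)
    finally show ?thesis by simp
  qed
  define Gm where "Gm = mat_adjoint Hm * Hm"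
  define Ge where "Ge = mat_adjoint He * He"
  have Gmc: "Gm \<in> carrier_mat nT nT" unfolding Gm_def by (rule mult_carrier_mat[OF adj_carrier[OF Hm] Hm])
  have Gec: "Ge \<in> carrier_mat nT nT" unfolding Ge_def by (rule mult_carrier_mat[OF adj_carrier[OF He] He])
  define Am where "Am = complex_of_real (1 / Nm) \<cdot>\<^sub>m (mat_adjoint L * Gm * L)"
  define Be where "Be = complex_of_real (1 / Ne) \<cdot>\<^sub>m (mat_adjoint L * Ge * L)"
  define Em where "Em = complex_of_real (c / Nm) \<cdot>\<^sub>m (mat_adjoint L * L)"
  have Amc: "Am \<in> carrier_mat nT nT" unfolding Am_def using aL Gmc Lc by simp
  have Bec: "Be \<in> carrier_mat nT nT" unfolding Be_def using aL Gec Lc by simp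
  have Emc: "Em \<in> carrier_mat nT nT" unfolding Em_def using aL Lc by simp
  have hAm: "mat_adjoint Am = Am" unfolding Am_def adj_smult_real
    using adj_conj_herm[OF Lc Gmc gram_herm[OF Hm, folded Gm_def]] by simp
  have hBe: "mat_adjoint Be = Be" unfolding Be_def adj_smult_real
    using adj_conj_herm[OF Lc Gec gram_herm[OF He, folded Ge_def]] by simp
  have qAm: "Re ((Am *\<^sub>v x) \<bullet>c x) = Re ((Hm *\<^sub>v (L *\<^sub>v x)) \<bullet>c (Hm *\<^sub>v (L *\<^sub>v x))) / Nm"
    if x: "x \<in> carrier_vec nT" for x
  proof -
    have "(Am *\<^sub>v x) \<bullet>c x = complex_of_real (1 / Nm) * (((mat_adjoint L * Gm * L) *\<^sub>v x) \<bullet>c x)"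
      unfolding Am_def by (rule qf_smat) (use aL Gmc Lc x in auto)
    also have "((mat_adjoint L * Gm * L) *\<^sub>v x) \<bullet>c x = (Gm *\<^sub>v (L *\<^sub>v x)) \<bullet>c (L *\<^sub>v x)"
      by (rule qf_conj[OF Lc Gmc x])
    also have "(Gm *\<^sub>v (L *\<^sub>v x)) \<bullet>c (L *\<^sub>v x) = (Hm *\<^sub>v (L *\<^sub>v x)) \<bullet>c (Hm *\<^sub>v (L *\<^sub>v x))"
      unfolding Gm_def by (rule qf_gram[OF Hm]) (use Lc x in simp)
    finally show ?thesis by simp
  qed
  have qBe: "Re ((Be *\<^sub>v x) \<bullet>c x) = Re ((He *\<^sub>v (L *\<^sub>v x)) \<bullet>c (He *\<^sub>v (L *\<^sub>v x))) / Ne"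
    if x: "x \<in> carrier_vec nT" for x
  proof -
    have "(Be *\<^sub>v x) \<bullet>c x = complex_of_real (1 / Ne) * (((mat_adjoint L * Ge * L) *\<^sub>v x) \<bullet>c x)"
      unfolding Be_def by (rule qf_smat) (use aL Gec Lc x in auto)
    also have "((mat_adjoint L * Ge * L) *\<^sub>v x) \<bullet>c x = (Ge *\<^sub>v (L *\<^sub>v x)) \<bullet>c (L *\<^sub>v x)"
      by (rule qf_conj[OF Lc Gec x])
    also have "(Ge *\<^sub>v (L *\<^sub>v x)) \<bullet>c (L *\<^sub>v x) = (He *\<^sub>v (L *\<^sub>v x)) \<bullet>c (He *\<^sub>v (L *\<^sub>v x))"
      unfolding Ge_def by (rule qf_gram[OF He]) (use Lc x in simp)
    finally show ?thesis by simp
  qed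
  have qEm: "Re ((Em *\<^sub>v x) \<bullet>c x) = c * Re ((L *\<^sub>v x) \<bullet>c (L *\<^sub>v x)) / Nm"
    if x: "x \<in> carrier_vec nT" for x
  proof -
    have "(Em *\<^sub>v x) \<bullet>c x = complex_of_real (c / Nm) * (((mat_adjoint L * L) *\<^sub>v x) \<bullet>c x)"
      unfolding Em_def by (rule qf_smat) (use aL Lc x in auto)
    also have "((mat_adjoint L * L) *\<^sub>v x) \<bullet>c x = (L *\<^sub>v x) \<bullet>c (L *\<^sub>v x)" by (rule qf_gram[OF Lc x])
    finally show ?thesis by simp
  qed
  have pos_norm: "Re (v \<bullet>c v) \<ge> 0" for v :: "complex vec" by (rule cnorm_nonneg)
  have le: "Re ((Am *\<^sub>v x) \<bullet>c x) \<le> Re ((Be *\<^sub>v x) \<bullet>c x) + Re ((Em *\<^sub>v x) \<bullet>c x)"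
    if x: "x \<in> carrier_vec nT" for x
  proof -
    define z where "z = L *\<^sub>v x"
    have z: "z \<in> carrier_vec nT" unfolding z_def using Lc x by simp
    have "(Phi *\<^sub>v z) \<bullet>c z = (Gm *\<^sub>v z) \<bullet>c z - ((complex_of_real (Nm / Ne) \<cdot>\<^sub>m Ge) *\<^sub>v z) \<bullet>c z"
      unfolding Phi Gm_def[symmetric] Ge_def[symmetric] by (rule qf_minus) (use Gmc Gec z in auto)
    also have "\<dots> = (Hm *\<^sub>v z) \<bullet>c (Hm *\<^sub>v z) - complex_of_real (Nm / Ne) * ((He *\<^sub>v z) \<bullet>c (He *\<^sub>v z))"
      using qf_gram[OF Hm z] qf_gram[OF He z] qf_smat[OF Gec z] unfolding Gm_def Ge_def by simp
    finally have "Re ((Hm *\<^sub>v z) \<bullet>c (Hm *\<^sub>v z)) - Nm / Ne * Re ((He *\<^sub>v z) \<bullet>c (He *\<^sub>v z)) \<le> c * Re (z \<bullet>c z)"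
      using ray[OF z] by simp
    then have h: "(Re ((Hm *\<^sub>v z) \<bullet>c (Hm *\<^sub>v z)) - Nm / Ne * Re ((He *\<^sub>v z) \<bullet>c (He *\<^sub>v z))) / Nm \<le> c * Re (z \<bullet>c z) / Nm"
      using Nm by (simp add: divide_right_mono)
    have "(Re ((Hm *\<^sub>v z) \<bullet>c (Hm *\<^sub>v z)) - Nm / Ne * Re ((He *\<^sub>v z) \<bullet>c (He *\<^sub>v z))) / Nm
      = Re ((Hm *\<^sub>v z) \<bullet>c (Hm *\<^sub>v z)) / Nm - Re ((He *\<^sub>v z) \<bullet>c (He *\<^sub>v z)) / Ne"
      using Nm Ne by (simp add: field_simps)
    with h have "Re ((Hm *\<^sub>v z) \<bullet>c (Hm *\<^sub>v z)) / Nm - Re ((He *\<^sub>v z) \<bullet>c (He *\<^sub>v z)) / Ne \<le> c * Re (z \<bullet>c z) / Nm"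
      by simp
    then show ?thesis unfolding qAm[OF x] qBe[OF x] qEm[OF x] z_def by simp
  qed
  have pAm: "Re ((Am *\<^sub>v x) \<bullet>c x) \<ge> 0" if "x \<in> carrier_vec nT" for x
    unfolding qAm[OF that] using Nm pos_norm by simp
  have pBe: "Re ((Be *\<^sub>v x) \<bullet>c x) \<ge> 0" if "x \<in> carrier_vec nT" for x
    unfolding qBe[OF that] using Ne pos_norm by simp
  have pEm: "Re ((Em *\<^sub>v x) \<bullet>c x) \<ge> 0" if "x \<in> carrier_vec nT" for x
    unfolding qEm[OF that] using Nm c pos_norm by simp
  have main: "ln (Re (det (1\<^sub>m nT + Am))) - ln (Re (det (1\<^sub>m nT + Be))) \<le> Re (mat_trace Em)"
    by (rule det_ineq[OF Amc Bec Emc hAm hBe pAm pBe pEm le])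
  have trE: "Re (mat_trace Em) = c * Re (mat_trace K) / Nm"
  proof -
    have "mat_trace (mat_adjoint L * L) = mat_trace (L * mat_adjoint L)"
      by (rule mat_trace_comm) (use aL Lc in auto)
    moreover have "mat_trace Em = complex_of_real (c / Nm) * mat_trace (mat_adjoint L * L)"
      unfolding Em_def by (rule trace_smult) (use aL Lc in auto)
    ultimately show ?thesis unfolding KL by simp
  qed
  have dm: "logdet_term Hm Nm K = ln (Re (det (1\<^sub>m nT + Am)))"
    unfolding logdet_term_def Am_def Gm_def KL using Hm logdet_sylv[OF Hm Lc] by simp
  have de: "logdet_term He Ne K = ln (Re (det (1\<^sub>m nT + Be)))"
    unfolding logdet_term_def Be_def Ge_def KL using He logdet_sylv[OF He Lc] by simp
  show ?thesis unfolding secrecy_rate_def dm de using main trE by simp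
qed

lemma eig_set: assumes U: "unitary n U" and Aeq: "A = U * dmat n d * mat_adjoint U"
  shows "{k. eigenvalue A k} = (\<lambda>i. complex_of_real (d i)) ` {..<n}"
proof -
  have Uc: "U \<in> carrier_mat n n" using U unitary_def by auto
  have Ac: "A \<in> carrier_mat n n" unfolding Aeq using Uc by simp
  show ?thesis
  proof (intro equalityI subsetI)
    fix k assume "k \<in> {k. eigenvalue A k}"
    then obtain v where v: "v \<in> carrier_vec n" "v \<noteq> 0\<^sub>v n" "A *\<^sub>v v = k \<cdot>\<^sub>v v"
      unfolding eigenvalue_def eigenvector_def using Ac by auto
    define y where "y = mat_adjoint U *\<^sub>v v"
    have y: "y \<in> carrier_vec n" unfolding y_def using Uc v by simp
    have Uy: "U *\<^sub>v y = v"
    proof -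
      have "U *\<^sub>v y = (U * mat_adjoint U) *\<^sub>v v" unfolding y_def
        by (rule assoc_mult_mat_vec[symmetric]) (use Uc v in auto)
      then show ?thesis using unitary_right[OF U] v by simp
    qed
    have y0: "y \<noteq> 0\<^sub>v n" using Uy v Uc by auto
    have "dmat n d *\<^sub>v y = mat_adjoint U *\<^sub>v (A *\<^sub>v v)"
    proof -
      have "A *\<^sub>v v = U *\<^sub>v (dmat n d *\<^sub>v y)" unfolding Aeq y_def by (rule mat3_vec) (use Uc v in auto)
      then have "mat_adjoint U *\<^sub>v (A *\<^sub>v v) = (mat_adjoint U * U) *\<^sub>v (dmat n d *\<^sub>v y)"
        by (simp add: assoc_mult_mat_vec[symmetric, of _ n n U n] Uc y)
      then show ?thesis using U y unfolding unitary_def by simp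
    qed
    also have "\<dots> = k \<cdot>\<^sub>v y" unfolding v(3) y_def by (rule mult_mat_vec) (use Uc v in auto)
    finally have Dy: "dmat n d *\<^sub>v y = k \<cdot>\<^sub>v y" .
    obtain j where j: "j < n" "y $ j \<noteq> 0" using y0 y by (metis eq_vecI carrier_vecD index_zero_vec(1,2))
    have "complex_of_real (d j) * y $ j = k * y $ j"
      using arg_cong[OF Dy, of "\<lambda>w. w $ j"] j y by (simp add: mv_dmat)
    then have "k = complex_of_real (d j)" using j by simp
    then show "k \<in> (\<lambda>i. complex_of_real (d i)) ` {..<n}" using j by auto
  next
    fix k assume "k \<in> (\<lambda>i. complex_of_real (d i)) ` {..<n}"
    then obtain i where i: "i < n" and k: "k = complex_of_real (d i)" by auto
    have "col U i \<noteq> 0\<^sub>v n" using unitary_col_norm[OF U i] by auto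
    then have "eigenvector A (col U i) k"
      unfolding eigenvector_def k Aeq using eigen_of_udu[OF U i] Uc i by simp
    then show "k \<in> {k. eigenvalue A k}" unfolding eigenvalue_def by auto
  qed
qed

lemma lambda_max_udu: assumes U: "unitary n U" and Aeq: "A = U * dmat n d * mat_adjoint U"
  shows "lambda_max A = Max (d ` {..<n})"
  unfolding lambda_max_def eig_set[OF U Aeq] image_image by simp

lemma smult_smult_mat': "(a::complex) \<cdot>\<^sub>m (b \<cdot>\<^sub>m X) = (a * b) \<cdot>\<^sub>m X"
  by (intro eq_matI) auto

lemma psd_zero: "psd_mat n (0\<^sub>m n n)"
  unfolding psd_mat_def by (auto simp: scalar_prod_def)

lemma logdet_zero: assumes H: "(H::complex mat) \<in> carrier_mat m n"
  shows "logdet_term H N (0\<^sub>m n n) = 0"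
proof -
  have "H * 0\<^sub>m n n * mat_adjoint H = 0\<^sub>m m m" using H by (intro eq_matI) (auto simp: scalar_prod_def)
  then show ?thesis unfolding logdet_term_def using H by simp
qed

lemma logdet_K0: assumes H: "(H::complex mat) \<in> carrier_mat m n" and u: "u \<in> carrier_vec n"
  shows "logdet_term H N (complex_of_real P \<cdot>\<^sub>m outer n u) = ln (1 + P / N * Re ((H *\<^sub>v u) \<bullet>c (H *\<^sub>v u)))"
proof -
  have aH: "mat_adjoint H \<in> carrier_mat n m" using H by simp
  have "H * (complex_of_real P \<cdot>\<^sub>m outer n u) * mat_adjoint H = complex_of_real P \<cdot>\<^sub>m (H * outer n u * mat_adjoint H)"
    using H aH by (simp add: mult_smult_distrib[OF H outer_carrier] mult_smult_assoc_mat[of _ m n _ m])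
  then have "complex_of_real (1 / N) \<cdot>\<^sub>m (H * (complex_of_real P \<cdot>\<^sub>m outer n u) * mat_adjoint H)
     = complex_of_real (P / N) \<cdot>\<^sub>m (H * outer n u * mat_adjoint H)"
    by (simp add: smult_smult_mat')
  then have "det (1\<^sub>m (dim_row H) + complex_of_real (1 / N) \<cdot>\<^sub>m (H * (complex_of_real P \<cdot>\<^sub>m outer n u) * mat_adjoint H))
     = 1 + complex_of_real (P / N) * ((H *\<^sub>v u) \<bullet>c (H *\<^sub>v u))"
    using rank_one_det[OF H u, of "P / N"] H by simp
  then show ?thesis unfolding logdet_term_def by simp
qed

lemma psd_K0: assumes u: "u \<in> carrier_vec n" and P: "P \<ge> 0"
  shows "psd_mat n (complex_of_real P \<cdot>\<^sub>m outer n u)"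
proof -
  define V where "V = mat_of_cols n [u]"
  have Vc: "V \<in> carrier_mat n 1" unfolding V_def using mat_of_cols_carrier(1)[of n "[u]"] by simp
  have O: "outer n u = mat_adjoint (mat_adjoint V) * mat_adjoint V" using outer_fact[OF u] unfolding V_def by simp
  have hO: "mat_adjoint (outer n u) = outer n u" by (intro eq_matI) (auto simp: outer_def)
  have "0 \<le> Re (((complex_of_real P \<cdot>\<^sub>m outer n u) *\<^sub>v v) \<bullet>c v)" if v: "v \<in> carrier_vec n" for v
  proof -
    have "((complex_of_real P \<cdot>\<^sub>m outer n u) *\<^sub>v v) \<bullet>c v = complex_of_real P * ((outer n u *\<^sub>v v) \<bullet>c v)"
      by (rule qf_smat[OF outer_carrier v])
    also have "(outer n u *\<^sub>v v) \<bullet>c v = (mat_adjoint V *\<^sub>v v) \<bullet>c (mat_adjoint V *\<^sub>v v)"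
      unfolding O by (rule qf_gram) (use Vc v in auto)
    finally show ?thesis using P cnorm_nonneg[of "mat_adjoint V *\<^sub>v v"] by simp
  qed
  then show ?thesis unfolding psd_mat_def using hO by (simp add: adj_smult_real)
qed

lemma trace_K0: assumes u: "u \<in> carrier_vec n" and uu: "u \<bullet>c u = 1"
  shows "Re (mat_trace (complex_of_real P \<cdot>\<^sub>m outer n u)) = P"
proof -
  have "mat_trace (outer n u) = u \<bullet>c u" unfolding mat_trace_def outer_def using u
    by (simp add: scalar_prod_def lessThan_atLeast0)
  then show ?thesis using trace_smult[OF outer_carrier, of "complex_of_real P" n u] uu by simp
qed

lemma ln_diff_lower: fixes x y :: real assumes "x > 0" "y > 0" shows "ln x - ln y \<ge> (x - y) / x"
proof -
  have "ln (y / x) \<le> y / x - 1" using ln_le_minus_one[of "y / x"] assms by simp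
  then have "ln y - ln x \<le> (y - x) / x" using assms by (simp add: ln_div diff_divide_distrib)
  moreover have "(x - y) / x = - ((y - x) / x)" by (simp add: minus_divide_left)
  ultimately show ?thesis by linarith
qed

theorem corollary1:
  fixes nT nR nE :: nat and Hm He :: "complex mat" and Nm Ne :: real
  assumes "nT \<ge> 1" "nR \<ge> 1" "nE \<ge> 1"
    and "Hm \<in> carrier_mat nR nT" and "He \<in> carrier_mat nE nT"
    and "Nm > 0" and "Ne > 0"
  defines "Phi \<equiv> mat_adjoint Hm * Hm - complex_of_real (Nm / Ne) \<cdot>\<^sub>m (mat_adjoint He * He)"
  shows "ebn0_s_min nT Hm He Nm Ne =
           (if max (lambda_max Phi) 0 > 0 then ereal (ln 2 / max (lambda_max Phi) 0) else \<infinity>)"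
proof -
  have nT: "nT \<ge> 1" and nR: "nR \<ge> 1" and Hm: "Hm \<in> carrier_mat nR nT" and He: "He \<in> carrier_mat nE nT"
    and Nm: "Nm > 0" and Ne: "Ne > 0" using assms by auto
  have PhiD: "Phi = mat_adjoint Hm * Hm - complex_of_real (Nm / Ne) \<cdot>\<^sub>m (mat_adjoint He * He)"
    unfolding Phi_def ..
  have dR: "dim_row Hm = nR" using Hm by simp
  have Gmc: "mat_adjoint Hm * Hm \<in> carrier_mat nT nT" by (rule mult_carrier_mat[OF adj_carrier[OF Hm] Hm])
  have Gec: "mat_adjoint He * He \<in> carrier_mat nT nT" by (rule mult_carrier_mat[OF adj_carrier[OF He] He])
  have Phic: "Phi \<in> carrier_mat nT nT" unfolding PhiD
    by (rule minus_carrier_mat) (use Gec in simp)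
  have hPhi: "mat_adjoint Phi = Phi"
    unfolding PhiD using Gmc Gec gram_herm[OF Hm] gram_herm[OF He]
    by (simp add: adj_minus[of _ nT nT] adj_smult)
  obtain U d where U: "unitary nT U" and Phieq: "Phi = U * dmat nT d * mat_adjoint U"
    using spectral[OF Phic hPhi] by auto
  have Uc: "U \<in> carrier_mat nT nT" using U unitary_def by auto
  define lam where "lam = lambda_max Phi"
  have lam_eq: "lam = Max (d ` {..<nT})" unfolding lam_def by (rule lambda_max_udu[OF U Phieq])
  have "0 \<in> {..<nT}" using nT by simp
  then have ne: "d ` {..<nT} \<noteq> {}" by blast
  have "lam \<in> d ` {..<nT}" unfolding lam_eq by (rule Max_in) (use ne in auto)
  then obtain i0 where i0: "i0 < nT" and di0: "d i0 = lam" by auto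
  have dle: "d i \<le> lam" if "i < nT" for i unfolding lam_eq by (rule Max_ge) (use that in auto)
  define c where "c = max lam 0"
  have c0: "c \<ge> 0" unfolding c_def by simp
  have ray: "Re ((Phi *\<^sub>v w) \<bullet>c w) \<le> c * Re (w \<bullet>c w)" if w: "w \<in> carrier_vec nT" for w
  proof -
    have "Re ((Phi *\<^sub>v w) \<bullet>c w) \<le> lam * Re (w \<bullet>c w)"
      unfolding Phieq by (rule rayleigh_upper[OF Uc U w]) (use dle in auto)
    also have "\<dots> \<le> c * Re (w \<bullet>c w)" unfolding c_def by (rule mult_right_mono) (use cnorm_nonneg in auto)
    finally show ?thesis .
  qed
  have rate_ub: "secrecy_rate Hm He Nm Ne K \<le> c * Re (mat_trace K) / Nm" if "psd_mat nT K" for K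
    by (rule rate_upper[OF Hm He Nm Ne PhiD c0 ray that])
  define Cs where "Cs snr = secrecy_capacity nT Hm He Nm Ne snr" for snr
  define Set where "Set snr = {secrecy_rate Hm He Nm Ne K | K. psd_mat nT K \<and>
            Re (mat_trace K) \<le> real (dim_row Hm) * Nm * snr}" for snr
  have Cs_def': "Cs snr = (1 / real nR) * Sup (Set snr)" for snr
    unfolding Cs_def Set_def secrecy_capacity_def dR ..
  have zero_in: "0 \<in> Set snr" if "snr > 0" for snr
  proof -
    have "secrecy_rate Hm He Nm Ne (0\<^sub>m nT nT) = 0"
      unfolding secrecy_rate_def using logdet_zero[OF Hm] logdet_zero[OF He] by simp
    moreover have "Re (mat_trace (0\<^sub>m nT nT)) = 0" unfolding mat_trace_def by simp
    ultimately show ?thesis unfolding Set_def using psd_zero[of nT] that Nm dR nR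
      by (intro CollectI exI[of _ "0\<^sub>m nT nT"]) auto
  qed
  have set_ub: "x \<le> c * real nR * snr" if xS: "x \<in> Set snr" and "snr > 0" for x snr
  proof -
    obtain K where K: "psd_mat nT K" and tr: "Re (mat_trace K) \<le> real nR * Nm * snr"
      and x: "x = secrecy_rate Hm He Nm Ne K" using xS[unfolded Set_def dR] by auto
    have "x \<le> c * Re (mat_trace K) / Nm" unfolding x by (rule rate_ub[OF K])
    also have "\<dots> \<le> c * (real nR * Nm * snr) / Nm"
      by (rule divide_right_mono, rule mult_left_mono) (use tr c0 Nm in auto)
    also have "\<dots> = c * real nR * snr" using Nm by simp
    finally show ?thesis .
  qed
  have bdd: "bdd_above (Set snr)" if "snr > 0" for snr
    using set_ub[OF _ that] unfolding bdd_above_def by blast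
  have Cs_ub: "Cs snr \<le> c * snr" if snr: "snr > 0" for snr
  proof -
    have "Sup (Set snr) \<le> c * real nR * snr"
      by (rule cSup_least) (use zero_in[OF snr] set_ub[OF _ snr] in auto)
    then have "(1 / real nR) * Sup (Set snr) \<le> (1 / real nR) * (c * real nR * snr)"
      by (rule mult_left_mono) simp
    then show ?thesis unfolding Cs_def' using nR by simp
  qed
  define u where "u = col U i0"
  have u: "u \<in> carrier_vec nT" unfolding u_def using Uc i0 by simp
  have uu: "u \<bullet>c u = 1" unfolding u_def by (rule unitary_col_norm[OF U i0])
  define a where "a = Re ((Hm *\<^sub>v u) \<bullet>c (Hm *\<^sub>v u)) / Nm"
  define b where "b = Re ((He *\<^sub>v u) \<bullet>c (He *\<^sub>v u)) / Ne"
  have a0: "a \<ge> 0" unfolding a_def using Nm cnorm_nonneg by simp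
  have b0: "b \<ge> 0" unfolding b_def using Ne cnorm_nonneg by simp
  have ab: "Nm * (a - b) = lam"
  proof -
    have "complex_of_real lam = (Phi *\<^sub>v u) \<bullet>c u" unfolding Phieq u_def di0[symmetric]
      by (rule qf_udu_col[OF U i0, symmetric])
    also have "\<dots> = ((mat_adjoint Hm * Hm) *\<^sub>v u) \<bullet>c u - ((complex_of_real (Nm / Ne) \<cdot>\<^sub>m (mat_adjoint He * He)) *\<^sub>v u) \<bullet>c u"
      unfolding PhiD by (rule qf_minus) (use Gmc Gec u in auto)
    also have "\<dots> = (Hm *\<^sub>v u) \<bullet>c (Hm *\<^sub>v u) - complex_of_real (Nm / Ne) * ((He *\<^sub>v u) \<bullet>c (He *\<^sub>v u))"
      using qf_gram[OF Hm u] qf_gram[OF He u] qf_smat[OF Gec u] by simp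
    finally have eq: "complex_of_real lam = (Hm *\<^sub>v u) \<bullet>c (Hm *\<^sub>v u) - complex_of_real (Nm / Ne) * ((He *\<^sub>v u) \<bullet>c (He *\<^sub>v u))" .
    have "lam = Re ((Hm *\<^sub>v u) \<bullet>c (Hm *\<^sub>v u)) - Nm / Ne * Re ((He *\<^sub>v u) \<bullet>c (He *\<^sub>v u))"
      using arg_cong[OF eq, of Re] by simp
    moreover have "Nm * (a - b) = Re ((Hm *\<^sub>v u) \<bullet>c (Hm *\<^sub>v u)) - Nm / Ne * Re ((He *\<^sub>v u) \<bullet>c (He *\<^sub>v u))"
      unfolding a_def b_def using Nm Ne by (simp add: right_diff_distrib)
    ultimately show ?thesis by simp
  qed
  define A where "A = real nR * Nm * a"
  have A0: "A \<ge> 0" unfolding A_def using a0 Nm by simp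
  have Cs_lb: "Cs snr \<ge> snr * lam / (1 + A * snr)" if snr: "snr > 0" for snr
  proof -
    define P where "P = real nR * Nm * snr"
    have P0: "P > 0" unfolding P_def using nR Nm snr by simp
    define K0 where "K0 = complex_of_real P \<cdot>\<^sub>m outer nT u"
    have K0: "psd_mat nT K0" unfolding K0_def by (rule psd_K0[OF u]) (use P0 in simp)
    have trK0: "Re (mat_trace K0) = P" unfolding K0_def by (rule trace_K0[OF u uu])
    have rK0: "secrecy_rate Hm He Nm Ne K0 = ln (1 + P * a) - ln (1 + P * b)"
      unfolding secrecy_rate_def K0_def logdet_K0[OF Hm u] logdet_K0[OF He u] a_def b_def by simp
    have inS: "secrecy_rate Hm He Nm Ne K0 \<in> Set snr"
      unfolding Set_def dR using K0 trK0 P_def by auto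
    have "ln (1 + P * a) - ln (1 + P * b) \<ge> ((1 + P * a) - (1 + P * b)) / (1 + P * a)"
    proof (rule ln_diff_lower)
      have "P * a \<ge> 0" "P * b \<ge> 0" using P0 a0 b0 by auto
      then show "0 < 1 + P * a" "0 < 1 + P * b" by linarith+
    qed
    also have "((1 + P * a) - (1 + P * b)) / (1 + P * a) = real nR * (snr * lam / (1 + A * snr))"
      unfolding P_def A_def ab[symmetric] by (simp add: field_simps)
    finally have r: "real nR * (snr * lam / (1 + A * snr)) \<le> secrecy_rate Hm He Nm Ne K0" unfolding rK0 .
    have "secrecy_rate Hm He Nm Ne K0 \<le> Sup (Set snr)" by (rule cSup_upper[OF inS bdd[OF snr]])
    with r have "real nR * (snr * lam / (1 + A * snr)) \<le> Sup (Set snr)" by linarith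
    then have "(1 / real nR) * (real nR * (snr * lam / (1 + A * snr))) \<le> (1 / real nR) * Sup (Set snr)"
      by (rule mult_left_mono) simp
    then show ?thesis unfolding Cs_def' using nR by simp
  qed
  define f where "f snr = (if Cs snr > 0 then ereal (snr * ln 2 / Cs snr) else \<infinity>)" for snr
  have E: "ebn0_s_min nT Hm He Nm Ne = (INF snr\<in>{0<..}. f snr)"
    unfolding ebn0_s_min_def f_def Cs_def ..
  have ln2: "ln (2::real) > 0" by simp
  show ?thesis
  proof (cases "lam > 0")
    case False
    then have c00: "c = 0" unfolding c_def by simp
    have finf: "f snr = \<infinity>" if "snr \<in> {0<..}" for snr
      using Cs_ub[of snr] that c00 unfolding f_def by auto
    have "(INF snr\<in>{0<..}. f snr) = \<infinity>"
    proof (intro antisym top_greatest INF_greatest)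
      fix snr :: real assume "snr \<in> {0<..}"
      then show "\<infinity> \<le> f snr" using finf by simp
    qed simp
    then show ?thesis using False E unfolding lam_def by simp
  next
    case True
    then have clam: "c = lam" unfolding c_def by simp
    have lower: "ereal (ln 2 / lam) \<le> (INF snr\<in>{0<..}. f snr)"
    proof (rule INF_greatest)
      fix snr :: real assume "snr \<in> {0<..}"
      then have snr: "snr > 0" by simp
      show "ereal (ln 2 / lam) \<le> f snr"
      proof (cases "Cs snr > 0")
        case True
        have "snr * ln 2 / (lam * snr) \<le> snr * ln 2 / Cs snr"
          by (rule divide_left_mono) (use Cs_ub[OF snr] clam True snr ln2 in auto)
        then show ?thesis unfolding f_def using True snr True by simp
      qed (simp add: f_def)
    qed
    have upper: "(INF snr\<in>{0<..}. f snr) \<le> ereal (ln 2 / lam)"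
    proof (rule ereal_le_epsilon2)
      fix e :: real assume e: "e > 0"
      define snr where "snr = e * lam / (ln 2 * (A + 1))"
      have snr: "snr > 0" unfolding snr_def using e True ln2 A0 by simp
      have Asnr: "A * snr \<le> e * lam / ln 2"
      proof -
        have "A * snr = (e * lam / ln 2) * (A / (A + 1))" unfolding snr_def using A0 by (simp add: field_simps)
        also have "\<dots> \<le> (e * lam / ln 2) * 1"
          by (rule mult_left_mono) (use A0 e True ln2 in auto)
        finally show ?thesis by simp
      qed
      have lb: "snr * lam / (1 + A * snr) \<le> Cs snr" by (rule Cs_lb[OF snr])
      have "A * snr \<ge> 0" using snr A0 by simp
      then have "1 + A * snr > 0" by linarith
      then have lbpos: "snr * lam / (1 + A * snr) > 0" using snr True by simp
      then have Cpos: "Cs snr > 0" using lb by linarith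
      have "snr * ln 2 / Cs snr \<le> snr * ln 2 / (snr * lam / (1 + A * snr))"
        by (rule divide_left_mono[OF lb]) (use snr ln2 mult_pos_pos[OF Cpos lbpos] in auto)
      also have "\<dots> = ln 2 / lam + ln 2 * (A * snr) / lam" using snr True A0 by (simp add: field_simps)
      also have "\<dots> \<le> ln 2 / lam + e"
      proof -
        have "ln 2 * (A * snr) / lam \<le> ln 2 * (e * lam / ln 2) / lam"
          by (rule divide_right_mono, rule mult_left_mono) (use Asnr ln2 True in auto)
        also have "\<dots> = e" using ln2 True by simp
        finally show ?thesis by simp
      qed
      finally have "f snr \<le> ereal (ln 2 / lam) + ereal e" unfolding f_def using Cpos by simp
      moreover have "(INF snr\<in>{0<..}. f snr) \<le> f snr" by (rule INF_lower) (use snr in simp)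
      ultimately show "(INF snr\<in>{0<..}. f snr) \<le> ereal (ln 2 / lam) + ereal e" by (rule order_trans[rotated])
    qed
    show ?thesis using antisym[OF upper lower] E True unfolding lam_def by simp
  qed
qed

end
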